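(* Let $\mathcal D\subset\mathbb R^d$ be compact and convex, $\Pi_{\mathcal D}(y)=\operatorname{argmin}_{x\in\mathcal D}|x-y|$, and let $\mathcal F:\mathbb R^d\to\mathbb R$ satisfy: (A1) $\inf\mathcal F>-\infty$; (A2) there exist $L_{\mathcal F},c_u,c_l,R_l>0$ with $|\mathcal F(x)-\mathcal F(y)|\le L_{\mathcal F}(1+|x|+|y|)|x-y|$ for all $x,y$, $\mathcal F(x)-\mathcal F(x^* )\le c_u(1+|x|^2)$ for all $x$, and $\mathcal F(x)-\mathcal F(x^* )\ge c_l|x|^2$ for all $|x|>R_l$, where $x^*$ is a global minimizer of $\mathcal F$. Let $\Delta t\in(0,1]$, $\lambda,\sigma,\nu,\alpha>0$, $\sigma_0\ge0$, $T>0$, $N\in\mathbb N$. Particle system: $(X_0^i,V_0^i)$, $i=1,\dots,N$, are i.i.d. with law $f_0\in\mathcal P_1(\mathcal D\times\mathbb R^d)$; for $k=0,1,\dots$, let $T_k^i\sim\mathrm{Bern}(e^{-\nu\Delta t})$ and $\xi_k^i\sim\mathcal N(0,I_d)$ be independent of each other, across $i,k$, and of the initial data; with $\rho_k^N=\frac1N\sum_i\delta_{X_k^i}$ set $(W_k^i)_\ell=\lambda(X^\alpha[\rho_k^N]-X_k^i)_\ell+\sigma(\sigma_0+|(X^\alpha[\rho_k^N]-X_k^i)_\ell|)\xi^i_{k,\ell}$ for $\ell=1,\dots,d$, and $V_{k+1}^i=T_k^iV_k^i+(1-T_k^i)W_k^i$, $X_{k+1}^i=\Pi_{\mathcal D}(X_k^i+\Delta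 t V_{k+1}^i)$. Nonlinear copies: $(\overline X_0^i,\overline V_0^i)=(X_0^i,V_0^i)$ and, with the same $T_k^i,\xi_k^i$ and $\rho_k=\mathrm{Law}(\overline X_k^i)$, $(\overline W_k^i)_\ell=\lambda(X^\alpha[\rho_k]-\overline X_k^i)_\ell+\sigma(\sigma_0+|(X^\alpha[\rho_k]-\overline X_k^i)_\ell|)\xi^i_{k,\ell}$, $\overline V_{k+1}^i=T_k^i\overline V_k^i+(1-T_k^i)\overline W_k^i$, $\overline X_{k+1}^i=\Pi_{\mathcal D}(\overline X_k^i+\Delta t\overline V_{k+1}^i)$. Then there exists a constant $C=C(\alpha,\mathcal D,\lambda,\sigma,\mathcal F,d)$, independent of $N$ and $T$, such that $$\sup_{k\Delta t\in[0,T]}\mathbb E\Big[\frac1N\sum_{i=1}^N|X_k^i-\overline X_k^i|+|V_k^i-\overline V_k^i|\Big]\le Ce^{CT}\frac1{\sqrt N}.$$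
   Context: For $\rho\in\mathcal P(\mathbb R^d)$, $X^\alpha[\rho]=\int x\,\omega_\alpha(x)\rho(dx)/\int\omega_\alpha(x)\rho(dx)$ with $\omega_\alpha(x)=\exp(-\alpha\mathcal F(x))$. $\mathcal P_1$ denotes probability measures with finite first moment; $|\cdot|$ is the Euclidean norm; $v_\ell$ denotes the $\ell$-th component. *)

theory Defs
  imports "HOL-Probability.Probability"
begin

definition cbo_weight :: "real \<Rightarrow> (real^'d \<Rightarrow> real) \<Rightarrow> real^'d \<Rightarrow> real" where
  "cbo_weight \<alpha> F x = exp (- \<alpha> * F x)"

definition Xalpha :: "real \<Rightarrow> (real^'d \<Rightarrow> real) \<Rightarrow> (real^'d) measure \<Rightarrow> real^'d" where
  "Xalpha \<alpha> F \<rho> =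
     (1 / (\<integral>x. cbo_weight \<alpha> F x \<partial>\<rho>)) *\<^sub>R (\<integral>x. cbo_weight \<alpha> F x *\<^sub>R x \<partial>\<rho>)"

text \<open>Empirical measure (1/N) sum_{i<N} delta_{x i}: the law of x I with I uniform on {0..<N}.\<close>

definition empirical_measure :: "nat \<Rightarrow> (nat \<Rightarrow> real^'d) \<Rightarrow> (real^'d) measure" where
  "empirical_measure N x = measure_pmf (map_pmf x (pmf_of_set {..<N}))"

text \<open>The vector W (componentwise drift plus anisotropic noise) and one update step.
  Coin value True corresponds to T = 1 (keep the old velocity).\<close>

definition cbo_W :: "real \<Rightarrow> real \<Rightarrow> real \<Rightarrow> real^'d \<Rightarrow> real^'d \<Rightarrow> real^'d \<Rightarrow> real^'d" where
  "cbo_W lam \<sigma> \<sigma>0 m x z =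
     (\<chi> l. lam * (m - x) $ l + \<sigma> * (\<sigma>0 + \<bar>(m - x) $ l\<bar>) * z $ l)"

definition cbo_update ::
  "(real^'d) set \<Rightarrow> real \<Rightarrow> real \<Rightarrow> real \<Rightarrow> real \<Rightarrow> real^'d \<Rightarrow> bool \<Rightarrow> real^'d
    \<Rightarrow> (real^'d) \<times> (real^'d) \<Rightarrow> (real^'d) \<times> (real^'d)" where
  "cbo_update D dt lam \<sigma> \<sigma>0 m t z xv =
     (let v' = (if t then snd xv else cbo_W lam \<sigma> \<sigma>0 m (fst xv) z)
      in (closest_point D (fst xv + dt *\<^sub>R v'), v'))"

primrec particles ::
  "real \<Rightarrow> (real^'d \<Rightarrow> real) \<Rightarrow> (real^'d) set \<Rightarrow> real \<Rightarrow> real \<Rightarrow> real \<Rightarrow> real \<Rightarrow>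
   (nat \<Rightarrow> 'a \<Rightarrow> real^'d) \<Rightarrow> (nat \<Rightarrow> 'a \<Rightarrow> real^'d) \<Rightarrow>
   (nat \<Rightarrow> nat \<Rightarrow> 'a \<Rightarrow> bool) \<Rightarrow> (nat \<Rightarrow> nat \<Rightarrow> 'a \<Rightarrow> real^'d) \<Rightarrow> nat \<Rightarrow>
   nat \<Rightarrow> 'a \<Rightarrow> nat \<Rightarrow> (real^'d) \<times> (real^'d)" where
  "particles \<alpha> F D dt lam \<sigma> \<sigma>0 X0 V0 Tb \<xi> N 0 = (\<lambda>\<omega> i. (X0 i \<omega>, V0 i \<omega>))"
| "particles \<alpha> F D dt lam \<sigma> \<sigma>0 X0 V0 Tb \<xi> N (Suc k) =
     (\<lambda>\<omega> i. cbo_update D dt lam \<sigma> \<sigma>0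
        (Xalpha \<alpha> F (empirical_measure N
            (\<lambda>j. fst (particles \<alpha> F D dt lam \<sigma> \<sigma>0 X0 V0 Tb \<xi> N k \<omega> j))))
        (Tb k i \<omega>) (\<xi> k i \<omega>) (particles \<alpha> F D dt lam \<sigma> \<sigma>0 X0 V0 Tb \<xi> N k \<omega> i))"

primrec mf_copies ::
  "'a measure \<Rightarrow> real \<Rightarrow> (real^'d \<Rightarrow> real) \<Rightarrow> (real^'d) set \<Rightarrow> real \<Rightarrow> real \<Rightarrow> real \<Rightarrow> real \<Rightarrow>
   (nat \<Rightarrow> 'a \<Rightarrow> real^'d) \<Rightarrow> (nat \<Rightarrow> 'a \<Rightarrow> real^'d) \<Rightarrow>
   (nat \<Rightarrow> nat \<Rightarrow> 'a \<Rightarrow> bool) \<Rightarrow> (nat \<Rightarrow> nat \<Rightarrow> 'a \<Rightarrow> real^'d) \<Rightarrow>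
   nat \<Rightarrow> 'a \<Rightarrow> nat \<Rightarrow> (real^'d) \<times> (real^'d)" where
  "mf_copies M \<alpha> F D dt lam \<sigma> \<sigma>0 X0 V0 Tb \<xi> 0 = (\<lambda>\<omega> i. (X0 i \<omega>, V0 i \<omega>))"
| "mf_copies M \<alpha> F D dt lam \<sigma> \<sigma>0 X0 V0 Tb \<xi> (Suc k) =
     (\<lambda>\<omega> i. cbo_update D dt lam \<sigma> \<sigma>0
        (Xalpha \<alpha> F (distr M borel
            (\<lambda>\<omega>'. fst (mf_copies M \<alpha> F D dt lam \<sigma> \<sigma>0 X0 V0 Tb \<xi> k \<omega>' i))))
        (Tb k i \<omega>) (\<xi> k i \<omega>) (mf_copies M \<alpha> F D dt lam \<sigma> \<sigma>0 X0 V0 Tb \<xi> k \<omega> i))"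

text \<open>Index set of all primitive random inputs: initial data of particle i,
  coin T_k^i, and component l of the Gaussian xi_k^i.\<close>

datatype 'd cbo_idx = Init nat | Coin nat nat | Noise nat nat 'd

definition cbo_sigmas ::
  "'a measure \<Rightarrow> (nat \<Rightarrow> 'a \<Rightarrow> real^'d) \<Rightarrow> (nat \<Rightarrow> 'a \<Rightarrow> real^'d) \<Rightarrow>
   (nat \<Rightarrow> nat \<Rightarrow> 'a \<Rightarrow> bool) \<Rightarrow> (nat \<Rightarrow> nat \<Rightarrow> 'a \<Rightarrow> real^'d) \<Rightarrow> 'd cbo_idx \<Rightarrow> 'a set set" where
  "cbo_sigmas M X0 V0 Tb \<xi> j = (case j of
      Init i \<Rightarrow> sets (vimage_algebra (space M) (\<lambda>\<omega>. (X0 i \<omega>, V0 i \<omega>)) borel)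
    | Coin k i \<Rightarrow> sets (vimage_algebra (space M) (Tb k i) (count_space UNIV))
    | Noise k i l \<Rightarrow> sets (vimage_algebra (space M) (\<lambda>\<omega>. \<xi> k i \<omega> $ l) borel))"

definition cbo_setting ::
  "'a measure \<Rightarrow> (real^'d) set \<Rightarrow> real \<Rightarrow> real \<Rightarrow> (((real^'d) \<times> (real^'d)) measure) \<Rightarrow>
   (nat \<Rightarrow> 'a \<Rightarrow> real^'d) \<Rightarrow> (nat \<Rightarrow> 'a \<Rightarrow> real^'d) \<Rightarrow>
   (nat \<Rightarrow> nat \<Rightarrow> 'a \<Rightarrow> bool) \<Rightarrow> (nat \<Rightarrow> nat \<Rightarrow> 'a \<Rightarrow> real^'d) \<Rightarrow> bool" where
  "cbo_setting M D dt \<nu> f0 X0 V0 Tb \<xi> \<longleftrightarrow>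
     prob_space M \<and>
     prob_space f0 \<and> sets f0 = sets borel \<and> emeasure f0 (D \<times> UNIV) = 1 \<and>
     integrable f0 (\<lambda>(x, v). norm x + norm v) \<and>
     (\<forall>i. (\<lambda>\<omega>. (X0 i \<omega>, V0 i \<omega>)) \<in> M \<rightarrow>\<^sub>M borel \<and>
          distr M borel (\<lambda>\<omega>. (X0 i \<omega>, V0 i \<omega>)) = f0) \<and>
     (\<forall>k i. Tb k i \<in> M \<rightarrow>\<^sub>M count_space UNIV \<and>
          distr M (count_space UNIV) (Tb k i) = measure_pmf (bernoulli_pmf (exp (- \<nu> * dt)))) \<and>
     (\<forall>k i l. distributed M lborel (\<lambda>\<omega>. \<xi> k i \<omega> $ l) std_normal_density) \<and>
     prob_space.indep_sets M (cbo_sigmas M X0 V0 Tb \<xi>) UNIV"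

end

theory Submission
  imports Defs
begin

lemma (in prob_space) indep_sets_reindex:
  assumes ind: "indep_sets F I" and inj: "inj_on f J" and sub: "f ` J \<subseteq> I"
  shows "indep_sets (\<lambda>j. F (f j)) J"
  unfolding indep_sets_def
proof (intro conjI ballI allI impI)
  fix j assume "j \<in> J" then show "F (f j) \<subseteq> events" using ind sub unfolding indep_sets_def by auto
next
  fix K A assume K: "K \<subseteq> J" "K \<noteq> {}" "finite K" and A: "A \<in> Pi K (\<lambda>j. F (f j))"
  define A' where "A' = (\<lambda>s. A (the_inv_into K f s))"
  have injK: "inj_on f K" using inj K inj_on_subset by blast
  have inv: "\<And>j. j \<in> K \<Longrightarrow> the_inv_into K f (f j) = j" using injK by (simp add: the_inv_into_f_f)
  have "f ` K \<subseteq> I" "f ` K \<noteq> {}" "finite (f ` K)" using K sub by auto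
  moreover have "A' \<in> Pi (f ` K) F" using A inv by (auto simp: A'_def)
  ultimately have "prob (\<Inter>s\<in>f ` K. A' s) = (\<Prod>s\<in>f ` K. prob (A' s))"
    using ind unfolding indep_sets_def by blast
  moreover have "(\<Inter>s\<in>f ` K. A' s) = (\<Inter>j\<in>K. A j)" using inv by (auto simp: A'_def)
  moreover have "(\<Prod>s\<in>f ` K. prob (A' s)) = (\<Prod>j\<in>K. prob (A j))"
    using injK inv by (simp add: prod.reindex A'_def)
  ultimately show "prob (\<Inter>j\<in>K. A j) = (\<Prod>j\<in>K. prob (A j))" by simp
qed

lemma vec_meas_components:
  fixes f :: "'b \<Rightarrow> real^'n::finite"
  assumes "\<And>l. (\<lambda>x. f x $ l) \<in> borel_measurable N"
  shows "f \<in> borel_measurable N"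
proof -
  have "\<forall>b\<in>Basis. (\<lambda>x. f x \<bullet> b) \<in> borel_measurable N"
  proof
    fix b :: "real^'n" assume "b \<in> Basis"
    then obtain l where l: "b = axis l 1" unfolding Basis_vec_def Basis_real_def by blast
    have "(\<lambda>x. f x \<bullet> axis l 1) \<in> borel_measurable N" using assms[of l] by (simp add: inner_axis)
    then show "(\<lambda>x. f x \<bullet> b) \<in> borel_measurable N" using l by simp
  qed
  then show ?thesis using borel_measurable_euclidean_space by blast
qed

locale cbo_prob = prob_space M
  for M :: "'a measure" and X0 V0 :: "nat \<Rightarrow> 'a \<Rightarrow> real^'d::finite" and Tb :: "nat \<Rightarrow> nat \<Rightarrow> 'a \<Rightarrow> bool"
    and \<xi> :: "nat \<Rightarrow> nat \<Rightarrow> 'a \<Rightarrow> real^'d" +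
  assumes meas_init: "\<And>i. (\<lambda>\<omega>. (X0 i \<omega>, V0 i \<omega>)) \<in> M \<rightarrow>\<^sub>M borel"
    and meas_coin: "\<And>k i. Tb k i \<in> M \<rightarrow>\<^sub>M count_space UNIV"
    and meas_noise: "\<And>k i l. (\<lambda>\<omega>. \<xi> k i \<omega> $ l) \<in> borel_measurable M"
    and indep_all: "indep_sets (cbo_sigmas M X0 V0 Tb \<xi>) UNIV"
begin

abbreviation "G \<equiv> cbo_sigmas M X0 V0 Tb \<xi>"

definition Sub :: "'d cbo_idx set \<Rightarrow> 'a measure" where
  "Sub S = sigma (space M) (\<Union>s\<in>S. G s)"

lemma G_events: "G s \<subseteq> sets M"
  using indep_all unfolding indep_sets_def by auto

lemma G_pow: "G s \<subseteq> Pow (space M)"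
  using G_events sets.sets_into_space by blast

lemma space_Sub[simp]: "space (Sub S) = space M"
  using G_pow unfolding Sub_def by (subst space_measure_of) auto

lemma sets_Sub: "sets (Sub S) = sigma_sets (space M) (\<Union>s\<in>S. G s)"
  using G_pow unfolding Sub_def by (subst sets_measure_of) auto

lemma Sub_subalg: "sets (Sub S) \<subseteq> sets M"
  unfolding sets_Sub using G_events by (intro sets.sigma_sets_subset) auto

lemma meas_Sub_M: "f \<in> Sub S \<rightarrow>\<^sub>M N \<Longrightarrow> f \<in> M \<rightarrow>\<^sub>M N"
  using Sub_subalg by (auto simp: measurable_def)

lemma Sub_mono_sets: "S \<subseteq> S' \<Longrightarrow> sets (Sub S) \<subseteq> sets (Sub S')"
  unfolding sets_Sub by (intro sigma_sets_subseteq) auto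

lemma meas_Sub_mono: "f \<in> Sub S \<rightarrow>\<^sub>M N \<Longrightarrow> S \<subseteq> S' \<Longrightarrow> f \<in> Sub S' \<rightarrow>\<^sub>M N"
  using Sub_mono_sets[of S S'] by (auto simp: measurable_def)

lemma G_in_Sub: "s \<in> S \<Longrightarrow> G s \<subseteq> sets (Sub S)"
  unfolding sets_Sub by auto

lemma meas_vimage_Sub:
  assumes f: "f \<in> M \<rightarrow>\<^sub>M N" and s: "s \<in> S"
    and Gs: "G s = sets (vimage_algebra (space M) f N)"
  shows "f \<in> Sub S \<rightarrow>\<^sub>M N"
proof -
  have fs: "f \<in> space M \<rightarrow> space N" using f by (auto simp: measurable_def)
  show ?thesis
    unfolding measurable_def
  proof (intro CollectI conjI ballI)
    show "f \<in> space (Sub S) \<rightarrow> space N" using fs by simp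
    fix A assume "A \<in> sets N"
    then have "f -` A \<inter> space M \<in> G s" unfolding Gs sets_vimage_algebra2[OF fs] by auto
    then show "f -` A \<inter> space (Sub S) \<in> sets (Sub S)" using G_in_Sub[OF s] by auto
  qed
qed

lemma meas_init_Sub: "Init i \<in> S \<Longrightarrow> (\<lambda>\<omega>. (X0 i \<omega>, V0 i \<omega>)) \<in> Sub S \<rightarrow>\<^sub>M borel"
  by (rule meas_vimage_Sub[OF meas_init]) (auto simp: cbo_sigmas_def)

lemma meas_coin_Sub: "Coin k i \<in> S \<Longrightarrow> Tb k i \<in> Sub S \<rightarrow>\<^sub>M count_space UNIV"
  by (rule meas_vimage_Sub[OF meas_coin]) (auto simp: cbo_sigmas_def)

lemma meas_noise_Sub: "Noise k i l \<in> S \<Longrightarrow> (\<lambda>\<omega>. \<xi> k i \<omega> $ l) \<in> borel_measurable (Sub S)"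
  by (rule meas_vimage_Sub[OF meas_noise]) (auto simp: cbo_sigmas_def)

lemma meas_noisevec_Sub: "(\<And>l. Noise k i l \<in> S) \<Longrightarrow> \<xi> k i \<in> borel_measurable (Sub S)"
  by (intro vec_meas_components meas_noise_Sub)

lemma Int_stable_G: "Int_stable (G s)"
  by (cases s) (simp_all add: cbo_sigmas_def Int_stableI sets.Int)

lemma indep_Sub:
  assumes disj: "S1 \<inter> S2 = {}"
    and f: "f \<in> Sub S1 \<rightarrow>\<^sub>M N1" and g: "g \<in> Sub S2 \<rightarrow>\<^sub>M N2"
  shows "indep_var N1 f N2 g"
proof -
  let ?I = "case_bool S1 S2"
  have "indep_sets G (\<Union>j\<in>UNIV. ?I j)"
    by (rule indep_sets_mono_index[OF _ indep_all]) auto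
  moreover have "disjoint_family_on ?I UNIV"
    using disj by (auto simp: disjoint_family_on_def split: bool.splits)
  ultimately have ind: "indep_sets (\<lambda>j. sigma_sets (space M) (\<Union>i\<in>?I j. G i)) UNIV"
    by (intro indep_sets_collect_sigma) (auto intro: Int_stable_G)
  have fM: "random_variable N1 f" and gM: "random_variable N2 g"
    using f g by (auto intro: meas_Sub_M)
  have sf: "sigma_sets (space M) {f -` A \<inter> space M |A. A \<in> sets N1} \<subseteq> sets (Sub S1)"
    using f by (intro sets.sigma_sets_subset[of _ "Sub S1", simplified]) (auto simp: measurable_def)
  have sg: "sigma_sets (space M) {g -` A \<inter> space M |A. A \<in> sets N2} \<subseteq> sets (Sub S2)"
    using g by (intro sets.sigma_sets_subset[of _ "Sub S2", simplified]) (auto simp: measurable_def)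
  show ?thesis
    unfolding indep_var_eq indep_set_def
  proof (intro conjI fM gM)
    show "indep_sets (case_bool (sigma_sets (space M) {f -` A \<inter> space M |A. A \<in> sets N1})
       (sigma_sets (space M) {g -` A \<inter> space M |A. A \<in> sets N2})) UNIV"
      using sf sg unfolding sets_Sub
      by (intro indep_sets_mono_sets[OF ind]) (auto split: bool.splits)
  qed
qed

end

definition wavg :: "(real^'d \<Rightarrow> real) \<Rightarrow> nat \<Rightarrow> (nat \<Rightarrow> real^'d) \<Rightarrow> real^'d" where
  "wavg w N x = (1 / (\<Sum>j<N. w (x j))) *\<^sub>R (\<Sum>j<N. w (x j) *\<^sub>R x j)"

lemma integral_empirical:
  fixes g :: "real^'d \<Rightarrow> 'b::{banach, second_countable_topology}"
  assumes "N \<ge> 1"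
  shows "(\<integral>y. g y \<partial>empirical_measure N x) = (1 / real N) *\<^sub>R (\<Sum>j<N. g (x j))"
proof -
  have ne: "{..<N} \<noteq> {}" using assms by (auto simp: lessThan_empty_iff)
  have "(\<integral>y. g y \<partial>empirical_measure N x) = (\<integral>j. g (x j) \<partial>measure_pmf (pmf_of_set {..<N}))"
    unfolding empirical_measure_def by (rule integral_map_pmf)
  also have "\<dots> = (\<Sum>j<N. pmf (pmf_of_set {..<N}) j *\<^sub>R g (x j))"
    by (rule integral_measure_pmf[of "{..<N}"]) (use ne in auto)
  also have "\<dots> = (\<Sum>j<N. (1 / real N) *\<^sub>R g (x j))"
    using ne by (intro sum.cong) auto
  finally show ?thesis by (simp add: scaleR_sum_right)
qed

lemma Xalpha_empirical:
  assumes "N \<ge> 1"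
  shows "Xalpha \<alpha> F (empirical_measure N x) = wavg (cbo_weight \<alpha> F) N x"
  unfolding Xalpha_def wavg_def using assms
  by (simp add: integral_empirical[OF assms])

lemma wavg_lipschitz:
  fixes w :: "real^'d \<Rightarrow> real" and D :: "(real^'d) set"
  assumes N: "N \<ge> 1"
    and R: "\<And>z. z \<in> D \<Longrightarrow> norm z \<le> R"
    and wl: "wl > 0" and wb: "\<And>z. z \<in> D \<Longrightarrow> wl \<le> w z \<and> w z \<le> wu"
    and Lw0: "Lw \<ge> 0" and wL: "\<And>z z'. z \<in> D \<Longrightarrow> z' \<in> D \<Longrightarrow> \<bar>w z - w z'\<bar> \<le> Lw * norm (z - z')"
    and x: "\<And>j. j < N \<Longrightarrow> x j \<in> D" and y: "\<And>j. j < N \<Longrightarrow> y j \<in> D"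
  shows "norm (wavg w N x - wavg w N y) \<le> ((2 * R * Lw + wu) / wl) * ((1 / real N) * (\<Sum>j<N. norm (x j - y j)))"
proof -
  define Sx where "Sx = (\<Sum>j<N. w (x j))"
  define Sy where "Sy = (\<Sum>j<N. w (y j))"
  define my where "my = wavg w N y"
  have Sxg: "Sx \<ge> real N * wl"
  proof -
    have "(\<Sum>j<N. wl) \<le> Sx" unfolding Sx_def using wb x by (intro sum_mono) auto
    then show ?thesis by simp
  qed
  have Sx0: "Sx > 0" using Sxg wl N by (smt (verit) mult_pos_pos of_nat_0_less_iff less_le_trans le_numeral_extra(2) One_nat_def Suc_le_eq)
  have Syg: "Sy \<ge> real N * wl"
  proof -
    have "(\<Sum>j<N. wl) \<le> Sy" unfolding Sy_def using wb y by (intro sum_mono) auto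
    then show ?thesis by simp
  qed
  have Sy0: "Sy > 0" using Syg wl N by (smt (verit) mult_pos_pos of_nat_0_less_iff less_le_trans le_numeral_extra(2) One_nat_def Suc_le_eq)
  have "norm (y 0) \<le> R" using R y N by simp
  then have R0: "R \<ge> 0" by (meson norm_ge_zero order_trans)
  have wpos: "\<And>z. z \<in> D \<Longrightarrow> w z \<ge> 0" using wb wl by (meson less_imp_le order_trans)
  have my_norm: "norm my \<le> R"
  proof -
    have "norm (\<Sum>j<N. w (y j) *\<^sub>R y j) \<le> (\<Sum>j<N. norm (w (y j) *\<^sub>R y j))" by (rule norm_sum)
    also have "\<dots> \<le> (\<Sum>j<N. w (y j) * R)"
      using wpos y R by (intro sum_mono) (auto intro: mult_left_mono)
    also have "\<dots> = Sy * R" unfolding Sy_def by (simp add: sum_distrib_right)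
    finally have "norm (\<Sum>j<N. w (y j) *\<^sub>R y j) \<le> Sy * R" .
    then show ?thesis using Sy0 unfolding my_def wavg_def Sy_def[symmetric]
      by (simp add: field_simps)
  qed
  have sumy: "(\<Sum>j<N. w (y j) *\<^sub>R (y j - my)) = 0"
  proof -
    have "(\<Sum>j<N. w (y j) *\<^sub>R (y j - my)) = (\<Sum>j<N. w (y j) *\<^sub>R y j) - Sy *\<^sub>R my"
      unfolding Sy_def by (simp add: scaleR_diff_right sum_subtractf scaleR_sum_left)
    also have "Sy *\<^sub>R my = (\<Sum>j<N. w (y j) *\<^sub>R y j)"
      using Sy0 unfolding my_def wavg_def Sy_def[symmetric] by simp
    finally show ?thesis by simp
  qed
  have eqx: "wavg w N x - my = (1 / Sx) *\<^sub>R (\<Sum>j<N. w (x j) *\<^sub>R (x j - my))"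
  proof -
    have "(\<Sum>j<N. w (x j) *\<^sub>R (x j - my)) = (\<Sum>j<N. w (x j) *\<^sub>R x j) - Sx *\<^sub>R my"
      unfolding Sx_def by (simp add: scaleR_diff_right sum_subtractf scaleR_sum_left)
    then show ?thesis using Sx0 unfolding wavg_def Sx_def[symmetric]
      by (simp add: scaleR_diff_right)
  qed
  have "(\<Sum>j<N. w (x j) *\<^sub>R (x j - my)) = (\<Sum>j<N. w (x j) *\<^sub>R (x j - my)) - (\<Sum>j<N. w (y j) *\<^sub>R (y j - my))"
    using sumy by simp
  also have "\<dots> = (\<Sum>j<N. (w (x j) - w (y j)) *\<^sub>R (x j - my) + w (y j) *\<^sub>R (x j - y j))"
    by (simp add: sum_subtractf[symmetric] algebra_simps)
  finally have eqs: "(\<Sum>j<N. w (x j) *\<^sub>R (x j - my)) = (\<Sum>j<N. (w (x j) - w (y j)) *\<^sub>R (x j - my) + w (y j) *\<^sub>R (x j - y j))" .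
  have bnd: "norm ((w (x j) - w (y j)) *\<^sub>R (x j - my) + w (y j) *\<^sub>R (x j - y j)) \<le> (2 * R * Lw + wu) * norm (x j - y j)"
    if j: "j < N" for j
  proof -
    have "norm ((w (x j) - w (y j)) *\<^sub>R (x j - my)) = \<bar>w (x j) - w (y j)\<bar> * norm (x j - my)" by simp
    also have "\<dots> \<le> (Lw * norm (x j - y j)) * (2 * R)"
    proof (rule mult_mono)
      show "\<bar>w (x j) - w (y j)\<bar> \<le> Lw * norm (x j - y j)" using wL x y j by auto
      have "norm (x j - my) \<le> norm (x j) + norm my" by (rule norm_triangle_ineq4)
      also have "\<dots> \<le> 2 * R" using R[OF x[OF j]] my_norm by simp
      finally show "norm (x j - my) \<le> 2 * R" .
      show "0 \<le> Lw * norm (x j - y j)" using wL x y j by (meson abs_ge_zero order_trans)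
    qed simp
    finally have a: "norm ((w (x j) - w (y j)) *\<^sub>R (x j - my)) \<le> 2 * R * Lw * norm (x j - y j)" by (simp add: mult_ac)
    have b: "norm (w (y j) *\<^sub>R (x j - y j)) \<le> wu * norm (x j - y j)"
      using wb[OF y[OF j]] wpos[OF y[OF j]] by (simp add: mult_right_mono)
    show ?thesis using norm_triangle_le[OF add_mono[OF a b]] by (simp add: algebra_simps)
  qed
  have "norm (wavg w N x - wavg w N y) = (1 / Sx) * norm (\<Sum>j<N. w (x j) *\<^sub>R (x j - my))"
    using eqx Sx0 by (simp add: my_def)
  also have "\<dots> \<le> (1 / Sx) * (\<Sum>j<N. (2 * R * Lw + wu) * norm (x j - y j))"
    unfolding eqs using Sx0 by (intro mult_left_mono order_trans[OF norm_sum] sum_mono bnd) auto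
  also have "\<dots> = (2 * R * Lw + wu) * (1 / Sx) * (\<Sum>j<N. norm (x j - y j))"
    by (simp add: sum_distrib_left)
  also have "\<dots> \<le> (2 * R * Lw + wu) * (1 / (real N * wl)) * (\<Sum>j<N. norm (x j - y j))"
  proof (intro mult_right_mono mult_left_mono)
    have "0 < real N * wl" using wl N by simp
      then show "1 / Sx \<le> 1 / (real N * wl)" using Sxg by (intro divide_left_mono) auto
    show "0 \<le> 2 * R * Lw + wu" using Lw0 R0 wb[OF x[of 0]] wl N by (smt (verit) mult_nonneg_nonneg Suc_le_eq One_nat_def)
  qed (auto intro: sum_nonneg)
  also have "\<dots> = ((2 * R * Lw + wu) / wl) * ((1 / real N) * (\<Sum>j<N. norm (x j - y j)))"
    by (simp add: field_simps)
  finally show ?thesis .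
qed

lemma vec_nth_meas[measurable]:
  fixes f :: "'b \<Rightarrow> real^'n::finite"
  assumes "f \<in> borel_measurable N"
  shows "(\<lambda>x. f x $ l) \<in> borel_measurable N"
proof -
  have "(\<lambda>x. f x \<bullet> axis l 1) \<in> borel_measurable N" using assms by measurable
  then show ?thesis by (simp add: inner_axis)
qed

lemma cbo_W_meas:
  assumes [measurable]: "m \<in> borel_measurable N" "x \<in> borel_measurable N" "z \<in> borel_measurable N"
  shows "(\<lambda>\<omega>. cbo_W lam \<sigma> \<sigma>0 (m \<omega>) (x \<omega>) (z \<omega>)) \<in> borel_measurable N"
  by (rule vec_meas_components) (simp add: cbo_W_def)

lemma closest_point_meas:
  assumes "convex D" "closed D" "D \<noteq> {}" "f \<in> borel_measurable N"
  shows "(\<lambda>\<omega>. closest_point D (f \<omega>)) \<in> borel_measurable N"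
  by (rule borel_measurable_continuous_on[OF continuous_on_closest_point[OF assms(1-3)] assms(4)])

lemma cbo_update_fst: "fst (cbo_update D dt lam \<sigma> \<sigma>0 m t z (x, v)) =
   closest_point D (x + dt *\<^sub>R (if t then v else cbo_W lam \<sigma> \<sigma>0 m x z))"
  by (simp add: cbo_update_def Let_def)
lemma cbo_update_snd: "snd (cbo_update D dt lam \<sigma> \<sigma>0 m t z (x, v)) =
   (if t then v else cbo_W lam \<sigma> \<sigma>0 m x z)"
  by (simp add: cbo_update_def Let_def)

lemma upd_meas:
  fixes D :: "(real^'d::finite) set"
  assumes D: "convex D" "closed D" "D \<noteq> {}"
    and [measurable]: "m \<in> borel_measurable N" "t \<in> N \<rightarrow>\<^sub>M count_space UNIV"
      "z \<in> borel_measurable N" "x \<in> borel_measurable N" "v \<in> borel_measurable N"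
  shows "(\<lambda>\<omega>. snd (cbo_update D dt lam \<sigma> \<sigma>0 (m \<omega>) (t \<omega>) (z \<omega>) (x \<omega>, v \<omega>))) \<in> borel_measurable N"
    and "(\<lambda>\<omega>. fst (cbo_update D dt lam \<sigma> \<sigma>0 (m \<omega>) (t \<omega>) (z \<omega>) (x \<omega>, v \<omega>))) \<in> borel_measurable N"
proof -
  have W: "(\<lambda>\<omega>. cbo_W lam \<sigma> \<sigma>0 (m \<omega>) (x \<omega>) (z \<omega>)) \<in> borel_measurable N"
    by (rule cbo_W_meas) simp_all
  have set: "{\<omega> \<in> space N. t \<omega>} \<in> sets N"
  proof -
    have "{\<omega> \<in> space N. t \<omega>} = t -` {True} \<inter> space N" by auto
    also have "\<dots> \<in> sets N" by (rule measurable_sets[OF assms(5)]) simp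
    finally show ?thesis .
  qed
  have S: "(\<lambda>\<omega>. if t \<omega> then v \<omega> else cbo_W lam \<sigma> \<sigma>0 (m \<omega>) (x \<omega>) (z \<omega>)) \<in> borel_measurable N"
    by (rule measurable_If[OF _ W set]) simp
  show "(\<lambda>\<omega>. snd (cbo_update D dt lam \<sigma> \<sigma>0 (m \<omega>) (t \<omega>) (z \<omega>) (x \<omega>, v \<omega>))) \<in> borel_measurable N"
    using S by (simp only: cbo_update_snd)
  have "(\<lambda>\<omega>. x \<omega> + dt *\<^sub>R (if t \<omega> then v \<omega> else cbo_W lam \<sigma> \<sigma>0 (m \<omega>) (x \<omega>) (z \<omega>))) \<in> borel_measurable N"
    using S by measurable
  from closest_point_meas[OF D this]
  show "(\<lambda>\<omega>. fst (cbo_update D dt lam \<sigma> \<sigma>0 (m \<omega>) (t \<omega>) (z \<omega>) (x \<omega>, v \<omega>))) \<in> borel_measurable N"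
    by (simp only: cbo_update_fst)
qed

lemma wavg_meas:
  assumes w[measurable]: "w \<in> borel_measurable borel" and x[measurable]: "\<And>j. x j \<in> borel_measurable N"
  shows "(\<lambda>\<omega>. wavg w K (\<lambda>j. x j \<omega>)) \<in> borel_measurable N"
  unfolding wavg_def by measurable

locale cbo_main = cbo_prob M X0 V0 Tb \<xi> for M :: "'a measure" and X0 V0 Tb and \<xi> :: "nat \<Rightarrow> nat \<Rightarrow> 'a \<Rightarrow> real^'d::finite" +
  fixes D :: "(real^'d) set" and F :: "real^'d \<Rightarrow> real"
    and \<alpha> lam \<sigma> \<sigma>0 dt p :: real and N :: nat and R wl wu Lw :: real
  assumes D_compact: "compact D" and D_convex: "convex D" and D_ne: "D \<noteq> {}"
    and X0D: "AE \<omega> in M. \<forall>i. X0 i \<omega> \<in> D"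
    and Fcont: "continuous_on UNIV F"
    and R: "\<And>z. z \<in> D \<Longrightarrow> norm z \<le> R"
    and wl: "wl > 0" and wb: "\<And>z. z \<in> D \<Longrightarrow> wl \<le> cbo_weight \<alpha> F z \<and> cbo_weight \<alpha> F z \<le> wu"
    and Lw0: "Lw \<ge> 0"
    and wL: "\<And>z z'. z \<in> D \<Longrightarrow> z' \<in> D \<Longrightarrow> \<bar>cbo_weight \<alpha> F z - cbo_weight \<alpha> F z'\<bar> \<le> Lw * norm (z - z')"
    and N1: "N \<ge> 1" and lam: "lam > 0" and sig: "\<sigma> > 0" and dt: "dt > 0" "dt \<le> 1"
    and p01: "0 \<le> p" "p \<le> 1"
    and coin_law: "\<And>k i. distr M (count_space UNIV) (Tb k i) = measure_pmf (bernoulli_pmf p)"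
    and noise_law: "\<And>k i l. distributed M lborel (\<lambda>\<omega>. \<xi> k i \<omega> $ l) std_normal_density"
begin

abbreviation "w \<equiv> cbo_weight \<alpha> F"
abbreviation "P \<equiv> particles \<alpha> F D dt lam \<sigma> \<sigma>0 X0 V0 Tb \<xi> N"
abbreviation "Q \<equiv> mf_copies M \<alpha> F D dt lam \<sigma> \<sigma>0 X0 V0 Tb \<xi>"

definition pastall :: "nat \<Rightarrow> 'd cbo_idx set" where
  "pastall k = {s. case s of Init _ \<Rightarrow> True | Coin j _ \<Rightarrow> j < k | Noise j _ _ \<Rightarrow> j < k}"
definition past :: "nat \<Rightarrow> nat \<Rightarrow> 'd cbo_idx set" where
  "past i k = {s. case s of Init i' \<Rightarrow> i' = i | Coin j i' \<Rightarrow> j < k \<and> i' = i | Noise j i' _ \<Rightarrow> j < k \<and> i' = i}"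

lemma D_closed: "closed D" using D_compact compact_imp_closed by blast

lemma F_meas[measurable]: "F \<in> borel_measurable borel"
  using Fcont by (rule borel_measurable_continuous_onI)

lemma w_meas[measurable]: "w \<in> borel_measurable borel"
  unfolding cbo_weight_def by measurable

lemma pastall_mono: "k \<le> k' \<Longrightarrow> pastall k \<subseteq> pastall k'"
  by (auto simp: pastall_def split: cbo_idx.splits)
lemma past_mono: "k \<le> k' \<Longrightarrow> past i k \<subseteq> past i k'"
  by (auto simp: past_def split: cbo_idx.splits)

lemma P_Suc: "P (Suc k) \<omega> i = cbo_update D dt lam \<sigma> \<sigma>0 (wavg w N (\<lambda>j. fst (P k \<omega> j)))
        (Tb k i \<omega>) (\<xi> k i \<omega>) (fst (P k \<omega> i), snd (P k \<omega> i))"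
  using N1 by (simp add: Xalpha_empirical)

definition mbar :: "nat \<Rightarrow> nat \<Rightarrow> real^'d" where
  "mbar k i = Xalpha \<alpha> F (distr M borel (\<lambda>\<omega>'. fst (Q k \<omega>' i)))"

lemma Q_Suc: "Q (Suc k) \<omega> i = cbo_update D dt lam \<sigma> \<sigma>0 (mbar k i)
        (Tb k i \<omega>) (\<xi> k i \<omega>) (fst (Q k \<omega> i), snd (Q k \<omega> i))"
  by (simp add: mbar_def)

lemma P_meas: "(\<lambda>\<omega>. fst (P k \<omega> i)) \<in> borel_measurable (Sub (pastall k)) \<and>
               (\<lambda>\<omega>. snd (P k \<omega> i)) \<in> borel_measurable (Sub (pastall k))"
proof (induction k arbitrary: i)
  case 0
  have "(\<lambda>\<omega>. (X0 i \<omega>, V0 i \<omega>)) \<in> Sub (pastall 0) \<rightarrow>\<^sub>M borel"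
    by (rule meas_init_Sub) (simp add: pastall_def)
  then have "(\<lambda>\<omega>. (X0 i \<omega>, V0 i \<omega>)) \<in> Sub (pastall 0) \<rightarrow>\<^sub>M borel \<Otimes>\<^sub>M borel" by (simp add: borel_prod)
  then show ?case by (simp add: measurable_pair_iff o_def)
next
  case (Suc k)
  let ?S = "Sub (pastall (Suc k))"
  have sub: "pastall k \<subseteq> pastall (Suc k)" by (rule pastall_mono) simp
  have x: "\<And>j. (\<lambda>\<omega>. fst (P k \<omega> j)) \<in> borel_measurable ?S"
    using Suc.IH sub by (blast intro: meas_Sub_mono)
  have v: "(\<lambda>\<omega>. snd (P k \<omega> i)) \<in> borel_measurable ?S"
    using Suc.IH sub by (blast intro: meas_Sub_mono)
  have m: "(\<lambda>\<omega>. wavg w N (\<lambda>j. fst (P k \<omega> j))) \<in> borel_measurable ?S"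
    by (rule wavg_meas[OF w_meas x])
  have t: "Tb k i \<in> ?S \<rightarrow>\<^sub>M count_space UNIV" by (rule meas_coin_Sub) (simp add: pastall_def)
  have z: "\<xi> k i \<in> borel_measurable ?S" by (rule meas_noisevec_Sub) (simp add: pastall_def)
  show ?case unfolding P_Suc
    using upd_meas[OF D_convex D_closed D_ne m t z x[of i] v] by simp
qed

lemma Q_meas: "(\<lambda>\<omega>. fst (Q k \<omega> i)) \<in> borel_measurable (Sub (past i k)) \<and>
               (\<lambda>\<omega>. snd (Q k \<omega> i)) \<in> borel_measurable (Sub (past i k))"
proof (induction k)
  case 0
  have "(\<lambda>\<omega>. (X0 i \<omega>, V0 i \<omega>)) \<in> Sub (past i 0) \<rightarrow>\<^sub>M borel"
    by (rule meas_init_Sub) (simp add: past_def)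
  then have "(\<lambda>\<omega>. (X0 i \<omega>, V0 i \<omega>)) \<in> Sub (past i 0) \<rightarrow>\<^sub>M borel \<Otimes>\<^sub>M borel" by (simp add: borel_prod)
  then show ?case by (simp add: measurable_pair_iff o_def)
next
  case (Suc k)
  let ?S = "Sub (past i (Suc k))"
  have sub: "past i k \<subseteq> past i (Suc k)" by (rule past_mono) simp
  have x: "(\<lambda>\<omega>. fst (Q k \<omega> i)) \<in> borel_measurable ?S"
    using Suc.IH sub by (blast intro: meas_Sub_mono)
  have v: "(\<lambda>\<omega>. snd (Q k \<omega> i)) \<in> borel_measurable ?S"
    using Suc.IH sub by (blast intro: meas_Sub_mono)
  have m: "(\<lambda>\<omega>. mbar k i) \<in> borel_measurable ?S" by simp
  have t: "Tb k i \<in> ?S \<rightarrow>\<^sub>M count_space UNIV" by (rule meas_coin_Sub) (simp add: past_def)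
  have z: "\<xi> k i \<in> borel_measurable ?S" by (rule meas_noisevec_Sub) (simp add: past_def)
  show ?case unfolding Q_Suc
    using upd_meas[OF D_convex D_closed D_ne m t z x v] by simp
qed

lemma P_meas_M: "(\<lambda>\<omega>. fst (P k \<omega> i)) \<in> borel_measurable M" "(\<lambda>\<omega>. snd (P k \<omega> i)) \<in> borel_measurable M"
  using P_meas by (blast intro: meas_Sub_M)+
lemma Q_meas_M: "(\<lambda>\<omega>. fst (Q k \<omega> i)) \<in> borel_measurable M" "(\<lambda>\<omega>. snd (Q k \<omega> i)) \<in> borel_measurable M"
  using Q_meas by (blast intro: meas_Sub_M)+

definition Good :: "'a \<Rightarrow> bool" where "Good \<omega> \<longleftrightarrow> (\<forall>i. X0 i \<omega> \<in> D)"

lemma AE_Good: "AE \<omega> in M. Good \<omega>" using X0D by (simp add: Good_def)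

lemma P_in_D: "Good \<omega> \<Longrightarrow> fst (P k \<omega> i) \<in> D"
  by (cases k) (auto simp: Good_def cbo_update_def Let_def closest_point_in_set[OF D_closed D_ne])

lemma Q_in_D: "Good \<omega> \<Longrightarrow> fst (Q k \<omega> i) \<in> D"
  by (cases k) (auto simp: Good_def cbo_update_def Let_def closest_point_in_set[OF D_closed D_ne])

end

lemma W_diff:
  fixes m x m' x' z :: "real^'d::finite"
  assumes "lam \<ge> 0" "\<sigma> \<ge> 0"
  shows "norm (cbo_W lam \<sigma> \<sigma>0 m x z - cbo_W lam \<sigma> \<sigma>0 m' x' z)
    \<le> (real CARD('d) * lam + \<sigma> * (\<Sum>l\<in>UNIV. \<bar>z $ l\<bar>)) * (norm (m - m') + norm (x - x'))"
proof -
  define c where "c = (m - x) - (m' - x')"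
  have nc: "norm c \<le> norm (m - m') + norm (x - x')"
  proof -
    have "c = (m - m') - (x - x')" unfolding c_def by (simp add: algebra_simps)
    then show ?thesis using norm_triangle_ineq4 by metis
  qed
  have comp: "\<bar>(cbo_W lam \<sigma> \<sigma>0 m x z - cbo_W lam \<sigma> \<sigma>0 m' x' z) $ l\<bar> \<le> (lam + \<sigma> * \<bar>z $ l\<bar>) * norm c" for l
  proof -
    have eq: "(cbo_W lam \<sigma> \<sigma>0 m x z - cbo_W lam \<sigma> \<sigma>0 m' x' z) $ l
        = lam * c $ l + \<sigma> * (\<bar>(m - x) $ l\<bar> - \<bar>(m' - x') $ l\<bar>) * z $ l"
      unfolding cbo_W_def c_def by (simp add: algebra_simps)
    have a: "\<bar>\<bar>(m - x) $ l\<bar> - \<bar>(m' - x') $ l\<bar>\<bar> \<le> \<bar>c $ l\<bar>" unfolding c_def by simp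
    have cl: "\<bar>c $ l\<bar> \<le> norm c" by (rule component_le_norm_cart)
    have "\<bar>lam * c $ l + \<sigma> * (\<bar>(m - x) $ l\<bar> - \<bar>(m' - x') $ l\<bar>) * z $ l\<bar>
        \<le> lam * \<bar>c $ l\<bar> + \<sigma> * \<bar>c $ l\<bar> * \<bar>z $ l\<bar>"
    proof -
      have "\<bar>\<sigma> * (\<bar>(m - x) $ l\<bar> - \<bar>(m' - x') $ l\<bar>) * z $ l\<bar> = \<sigma> * \<bar>\<bar>(m - x) $ l\<bar> - \<bar>(m' - x') $ l\<bar>\<bar> * \<bar>z $ l\<bar>"
        using assms by (simp add: abs_mult)
      also have "\<dots> \<le> \<sigma> * \<bar>c $ l\<bar> * \<bar>z $ l\<bar>"
        using assms a by (intro mult_right_mono mult_left_mono) auto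
      finally have b: "\<bar>\<sigma> * (\<bar>(m - x) $ l\<bar> - \<bar>(m' - x') $ l\<bar>) * z $ l\<bar> \<le> \<sigma> * \<bar>c $ l\<bar> * \<bar>z $ l\<bar>" .
      have a: "\<bar>lam * c $ l\<bar> = lam * \<bar>c $ l\<bar>" using assms by (simp add: abs_mult)
      show ?thesis using abs_triangle_ineq[of "lam * c $ l" "\<sigma> * (\<bar>(m - x) $ l\<bar> - \<bar>(m' - x') $ l\<bar>) * z $ l"] a b by linarith
    qed
    also have "\<dots> \<le> lam * norm c + \<sigma> * norm c * \<bar>z $ l\<bar>"
      using assms cl by (intro add_mono mult_left_mono mult_right_mono) auto
    finally show ?thesis unfolding eq by (simp add: algebra_simps)
  qed
  have "norm (cbo_W lam \<sigma> \<sigma>0 m x z - cbo_W lam \<sigma> \<sigma>0 m' x' z)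
      \<le> (\<Sum>l\<in>UNIV. \<bar>(cbo_W lam \<sigma> \<sigma>0 m x z - cbo_W lam \<sigma> \<sigma>0 m' x' z) $ l\<bar>)"
    by (rule norm_le_l1_cart)
  also have "\<dots> \<le> (\<Sum>l\<in>UNIV. (lam + \<sigma> * \<bar>z $ l\<bar>) * norm c)"
    by (intro sum_mono comp)
  also have "\<dots> = (real CARD('d) * lam + \<sigma> * (\<Sum>l\<in>UNIV. \<bar>z $ l\<bar>)) * norm c"
    by (simp add: sum.distrib sum_distrib_left sum_distrib_right algebra_simps)
  also have "\<dots> \<le> (real CARD('d) * lam + \<sigma> * (\<Sum>l\<in>UNIV. \<bar>z $ l\<bar>)) * (norm (m - m') + norm (x - x'))"
    using assms nc by (intro mult_left_mono) (auto intro!: add_nonneg_nonneg mult_nonneg_nonneg sum_nonneg)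
  finally show ?thesis .
qed

context cbo_prob
begin

lemma indep_expect:
  fixes f g :: "'a \<Rightarrow> real"
  assumes "S1 \<inter> S2 = {}" "f \<in> borel_measurable (Sub S1)" "g \<in> borel_measurable (Sub S2)"
    "integrable M f" "integrable M g"
  shows "(\<integral>\<omega>. f \<omega> * g \<omega> \<partial>M) = (\<integral>\<omega>. f \<omega> \<partial>M) * (\<integral>\<omega>. g \<omega> \<partial>M)"
    and "integrable M (\<lambda>\<omega>. f \<omega> * g \<omega>)"
  using indep_var_lebesgue_integral[OF indep_Sub[OF assms(1-3)] assms(4,5)]
    indep_var_integrable[OF indep_Sub[OF assms(1-3)] assms(4,5)] by auto

end

context cbo_main
begin

lemma coin_expect: "(\<integral>\<omega>. of_bool (Tb k i \<omega>) \<partial>M) = (p::real)"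
proof -
  have "(\<integral>\<omega>. of_bool (Tb k i \<omega>) \<partial>M) = (\<integral>b. (of_bool b :: real) \<partial>distr M (count_space UNIV) (Tb k i))"
    by (rule integral_distr[OF meas_coin, symmetric]) simp
  also have "\<dots> = p" unfolding coin_law using p01 by (simp add: integral_bernoulli_pmf)
  finally show ?thesis .
qed

lemma coin_meas: "(\<lambda>\<omega>. of_bool (Tb k i \<omega>) :: real) \<in> borel_measurable (Sub {Coin k i})"
proof -
  have "Tb k i \<in> Sub {Coin k i} \<rightarrow>\<^sub>M count_space UNIV" by (rule meas_coin_Sub) simp
  then show ?thesis by measurable
qed

lemma coin_int: "integrable M (\<lambda>\<omega>. of_bool (Tb k i \<omega>) :: real)"
  using coin_meas[THEN meas_Sub_M] by (intro integrable_const_bound[where B=1]) auto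

lemma noise_abs: "integrable M (\<lambda>\<omega>. \<bar>\<xi> k i \<omega> $ l\<bar>)" "(\<integral>\<omega>. \<bar>\<xi> k i \<omega> $ l\<bar> \<partial>M) \<le> 1"
proof -
  have d: "distributed M lborel (\<lambda>\<omega>. \<xi> k i \<omega> $ l) (\<lambda>x. ennreal (std_normal_density x))"
    using noise_law by simp
  have "integrable lborel (\<lambda>x. std_normal_density x * \<bar>x\<bar>)"
    using integrable_std_normal_moment_abs[of 1] by simp
  then show "integrable M (\<lambda>\<omega>. \<bar>\<xi> k i \<omega> $ l\<bar>)"
    using distributed_integrable[OF d, of abs] by simp
  have "(\<integral>\<omega>. \<bar>\<xi> k i \<omega> $ l\<bar> \<partial>M) = (\<integral>x. std_normal_density x * \<bar>x\<bar> \<partial>lborel)"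
    using distributed_integral[OF d, of abs] by simp
  also have "\<dots> = sqrt (2 / pi)"
    using integral_std_normal_moment_abs_odd[of 0] by simp
  also have "\<dots> \<le> 1" using pi_gt3 by (simp add: real_sqrt_le_1_iff)
  finally show "(\<integral>\<omega>. \<bar>\<xi> k i \<omega> $ l\<bar> \<partial>M) \<le> 1" .
qed

lemma noise_abs_meas: "(\<lambda>\<omega>. \<bar>\<xi> k i \<omega> $ l\<bar>) \<in> borel_measurable (Sub (range (Noise k i)))"
proof -
  have "(\<lambda>\<omega>. \<xi> k i \<omega> $ l) \<in> borel_measurable (Sub (range (Noise k i)))" by (rule meas_noise_Sub) simp
  then show ?thesis by measurable
qed


lemma law_facts:
  assumes Y: "Y \<in> borel_measurable M" and YD: "AE \<omega> in M. Y \<omega> \<in> D"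
  shows "integrable M (\<lambda>\<omega>. w (Y \<omega>))" and "(\<integral>\<omega>. w (Y \<omega>) \<partial>M) \<ge> wl"
    and "integrable M (\<lambda>\<omega>. w (Y \<omega>) *\<^sub>R Y \<omega>)"
    and "Xalpha \<alpha> F (distr M borel Y) = (1 / (\<integral>\<omega>. w (Y \<omega>) \<partial>M)) *\<^sub>R (\<integral>\<omega>. w (Y \<omega>) *\<^sub>R Y \<omega> \<partial>M)"
    and "norm (Xalpha \<alpha> F (distr M borel Y)) \<le> R"
    and "(\<integral>\<omega>. w (Y \<omega>) * (Y \<omega> $ l - Xalpha \<alpha> F (distr M borel Y) $ l) \<partial>M) = 0"
proof -
  note Y[measurable]
  let ?m = "Xalpha \<alpha> F (distr M borel Y)"
  show iw: "integrable M (\<lambda>\<omega>. w (Y \<omega>))"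
  proof (rule integrable_const_bound[where B=wu])
    show "AE \<omega> in M. norm (w (Y \<omega>)) \<le> wu"
      using YD
    proof (rule AE_mp, intro AE_I2 impI)
      fix \<omega> assume "Y \<omega> \<in> D"
      then show "norm (w (Y \<omega>)) \<le> wu" using wb[of "Y \<omega>"] wl by auto
    qed
  qed simp
  have iwY: "integrable M (\<lambda>\<omega>. w (Y \<omega>) *\<^sub>R Y \<omega>)"
  proof (rule integrable_const_bound[where B="wu * R"])
    show "AE \<omega> in M. norm (w (Y \<omega>) *\<^sub>R Y \<omega>) \<le> wu * R"
      using YD
    proof (rule AE_mp, intro AE_I2 impI)
      fix \<omega> assume "Y \<omega> \<in> D"
      then have b: "wl \<le> w (Y \<omega>) \<and> w (Y \<omega>) \<le> wu" "norm (Y \<omega>) \<le> R" using wb R by auto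
      then have "\<bar>w (Y \<omega>)\<bar> \<le> wu" using wl by (simp add: abs_le_iff)
      then show "norm (w (Y \<omega>) *\<^sub>R Y \<omega>) \<le> wu * R" using b by (simp add: mult_mono')
    qed
  qed simp
  then show "integrable M (\<lambda>\<omega>. w (Y \<omega>) *\<^sub>R Y \<omega>)" .
  have "(\<integral>\<omega>. wl \<partial>M) \<le> (\<integral>\<omega>. w (Y \<omega>) \<partial>M)"
  proof (rule integral_mono_AE[OF _ iw])
    show "AE \<omega> in M. wl \<le> w (Y \<omega>)"
      using YD by (rule AE_mp) (use wb in auto)
  qed simp
  then show Ew: "(\<integral>\<omega>. w (Y \<omega>) \<partial>M) \<ge> wl" by (simp add: prob_space)
  have e1: "(\<integral>x. w x \<partial>distr M borel Y) = (\<integral>\<omega>. w (Y \<omega>) \<partial>M)" by (rule integral_distr) auto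
  have e2: "(\<integral>x. w x *\<^sub>R x \<partial>distr M borel Y) = (\<integral>\<omega>. w (Y \<omega>) *\<^sub>R Y \<omega> \<partial>M)" by (rule integral_distr) auto
  show meq: "?m = (1 / (\<integral>\<omega>. w (Y \<omega>) \<partial>M)) *\<^sub>R (\<integral>\<omega>. w (Y \<omega>) *\<^sub>R Y \<omega> \<partial>M)"
    unfolding Xalpha_def e1 e2 ..
  have "norm (\<integral>\<omega>. w (Y \<omega>) *\<^sub>R Y \<omega> \<partial>M) \<le> (\<integral>\<omega>. norm (w (Y \<omega>) *\<^sub>R Y \<omega>) \<partial>M)"
    by (rule integral_norm_bound)
  also have "\<dots> \<le> (\<integral>\<omega>. R * w (Y \<omega>) \<partial>M)"
  proof (rule integral_mono_AE)
    show "integrable M (\<lambda>\<omega>. norm (w (Y \<omega>) *\<^sub>R Y \<omega>))" using iwY by (rule integrable_norm)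
    show "integrable M (\<lambda>\<omega>. R * w (Y \<omega>))" using iw by simp
    show "AE \<omega> in M. norm (w (Y \<omega>) *\<^sub>R Y \<omega>) \<le> R * w (Y \<omega>)"
      using YD
    proof (rule AE_mp, intro AE_I2 impI)
      fix \<omega> assume "Y \<omega> \<in> D"
      then have b: "wl \<le> w (Y \<omega>)" "norm (Y \<omega>) \<le> R" using wb R by auto
      then have "0 \<le> w (Y \<omega>)" "norm (Y \<omega>) \<le> R" using wl by auto
      then show "norm (w (Y \<omega>) *\<^sub>R Y \<omega>) \<le> R * w (Y \<omega>)" by (simp add: mult_right_mono mult.commute)
    qed
  qed
  also have "\<dots> = R * (\<integral>\<omega>. w (Y \<omega>) \<partial>M)" by simp
  finally have nb: "norm (\<integral>\<omega>. w (Y \<omega>) *\<^sub>R Y \<omega> \<partial>M) \<le> R * (\<integral>\<omega>. w (Y \<omega>) \<partial>M)" .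
  have Ewpos: "(\<integral>\<omega>. w (Y \<omega>) \<partial>M) > 0" using Ew wl by linarith
  show "norm ?m \<le> R" unfolding meq using nb Ewpos by (simp add: field_simps)
  have comp: "(\<integral>\<omega>. w (Y \<omega>) * Y \<omega> $ l \<partial>M) = (\<integral>\<omega>. w (Y \<omega>) *\<^sub>R Y \<omega> \<partial>M) $ l"
  proof -
    have "(\<integral>\<omega>. (w (Y \<omega>) *\<^sub>R Y \<omega>) \<bullet> axis l 1 \<partial>M) = (\<integral>\<omega>. w (Y \<omega>) *\<^sub>R Y \<omega> \<partial>M) \<bullet> axis l 1"
      using iwY by (rule integral_inner_left)
    then show ?thesis by (simp add: inner_axis)
  qed
  have ml: "?m $ l * (\<integral>\<omega>. w (Y \<omega>) \<partial>M) = (\<integral>\<omega>. w (Y \<omega>) *\<^sub>R Y \<omega> \<partial>M) $ l"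
    unfolding meq using Ewpos by simp
  have "(\<integral>\<omega>. w (Y \<omega>) * (Y \<omega> $ l - ?m $ l) \<partial>M) = (\<integral>\<omega>. w (Y \<omega>) * Y \<omega> $ l - ?m $ l * w (Y \<omega>) \<partial>M)"
    by (simp add: algebra_simps)
  also have "\<dots> = (\<integral>\<omega>. w (Y \<omega>) * Y \<omega> $ l \<partial>M) - ?m $ l * (\<integral>\<omega>. w (Y \<omega>) \<partial>M)"
  proof -
    have "integrable M (\<lambda>\<omega>. w (Y \<omega>) * Y \<omega> $ l)"
    proof -
      have "integrable M (\<lambda>\<omega>. (w (Y \<omega>) *\<^sub>R Y \<omega>) \<bullet> axis l 1)" using iwY by (rule integrable_inner_left)
      then show ?thesis by (simp add: inner_axis)
    qed
    then show ?thesis using iw by simp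
  qed
  also have "\<dots> = 0" using comp ml by simp
  finally show "(\<integral>\<omega>. w (Y \<omega>) * (Y \<omega> $ l - ?m $ l) \<partial>M) = 0" .
qed

lemma wavg_norm:
  assumes "\<And>j. j < N \<Longrightarrow> x j \<in> D"
  shows "norm (wavg w N x) \<le> R"
proof -
  define S where "S = (\<Sum>j<N. w (x j))"
  have wpos: "\<And>z. z \<in> D \<Longrightarrow> w z \<ge> 0" using wb wl by (meson less_imp_le order_trans)
  have "(\<Sum>j<N. wl) \<le> S" unfolding S_def using wb assms by (intro sum_mono) auto
  moreover have "real N * wl > 0" using wl N1 by simp
  ultimately have S0: "S > 0" by simp
  have "norm (\<Sum>j<N. w (x j) *\<^sub>R x j) \<le> (\<Sum>j<N. norm (w (x j) *\<^sub>R x j))" by (rule norm_sum)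
  also have "\<dots> \<le> (\<Sum>j<N. w (x j) * R)"
    using wpos assms R by (intro sum_mono) (auto intro: mult_left_mono)
  also have "\<dots> = S * R" unfolding S_def by (simp add: sum_distrib_right)
  finally show ?thesis using S0 unfolding wavg_def S_def[symmetric] by (simp add: field_simps)
qed

end

context cbo_main
begin

definition "dX k i \<omega> = norm (fst (P k \<omega> i) - fst (Q k \<omega> i))"
definition "dV k i \<omega> = norm (snd (P k \<omega> i) - snd (Q k \<omega> i))"
definition "mN k \<omega> = wavg w N (\<lambda>j. fst (P k \<omega> j))"
definition "mNb k \<omega> = wavg w N (\<lambda>j. fst (Q k \<omega> j))"
definition "dW k i \<omega> = norm (cbo_W lam \<sigma> \<sigma>0 (mN k \<omega>) (fst (P k \<omega> i)) (\<xi> k i \<omega>)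
                               - cbo_W lam \<sigma> \<sigma>0 (mbar k i) (fst (Q k \<omega> i)) (\<xi> k i \<omega>))"
definition "cc k i \<omega> = norm (mN k \<omega> - mbar k i) + dX k i \<omega>"

lemma past_sub_pastall: "past i k \<subseteq> pastall k"
  by (auto simp: past_def pastall_def split: cbo_idx.splits)

lemma Q_meas_all: "(\<lambda>\<omega>. fst (Q k \<omega> i)) \<in> borel_measurable (Sub (pastall k))"
    "(\<lambda>\<omega>. snd (Q k \<omega> i)) \<in> borel_measurable (Sub (pastall k))"
  using Q_meas past_sub_pastall by (blast intro: meas_Sub_mono)+

lemma dX_meas: "dX k i \<in> borel_measurable (Sub (pastall k))"
proof -
  note [measurable] = P_meas[THEN conjunct1] Q_meas_all(1)
  show ?thesis unfolding dX_def[abs_def] by measurable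
qed

lemma dV_meas: "dV k i \<in> borel_measurable (Sub (pastall k))"
proof -
  note [measurable] = P_meas[THEN conjunct2] Q_meas_all(2)
  show ?thesis unfolding dV_def[abs_def] by measurable
qed

lemma mN_meas: "mN k \<in> borel_measurable (Sub (pastall k))"
  unfolding mN_def[abs_def] by (rule wavg_meas[OF w_meas]) (use P_meas in blast)

lemma mNb_meas: "mNb k \<in> borel_measurable M"
  unfolding mNb_def[abs_def] by (rule wavg_meas[OF w_meas]) (use Q_meas_M in blast)

lemma cc_meas: "cc k i \<in> borel_measurable (Sub (pastall k))"
proof -
  note [measurable] = mN_meas dX_meas
  show ?thesis unfolding cc_def[abs_def] by measurable
qed

lemma dW_meas: "dW k i \<in> borel_measurable (Sub (pastall k \<union> range (Noise k i)))"
proof -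
  let ?S = "Sub (pastall k \<union> range (Noise k i))"
  have a: "mN k \<in> borel_measurable ?S" by (rule meas_Sub_mono[OF mN_meas]) auto
  have b: "(\<lambda>\<omega>. fst (P k \<omega> i)) \<in> borel_measurable ?S" by (rule meas_Sub_mono[OF P_meas[THEN conjunct1]]) auto
  have c: "(\<lambda>\<omega>. fst (Q k \<omega> i)) \<in> borel_measurable ?S" by (rule meas_Sub_mono[OF Q_meas_all(1)]) auto
  have z: "\<xi> k i \<in> borel_measurable ?S" by (rule meas_noisevec_Sub) auto
  note [measurable] = cbo_W_meas[OF a b z] cbo_W_meas[OF _ c z]
  show ?thesis unfolding dW_def[abs_def] by measurable
qed

lemma dV_Suc: "dV (Suc k) i \<omega> = of_bool (Tb k i \<omega>) * dV k i \<omega> + (1 - of_bool (Tb k i \<omega>)) * dW k i \<omega>"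
  unfolding dV_def dW_def P_Suc Q_Suc cbo_update_snd mN_def by simp

lemma dX_Suc: "dX (Suc k) i \<omega> \<le> dX k i \<omega> + dt * dV (Suc k) i \<omega>"
proof -
  have vP: "snd (P (Suc k) \<omega> i) = (if Tb k i \<omega> then snd (P k \<omega> i) else cbo_W lam \<sigma> \<sigma>0 (mN k \<omega>) (fst (P k \<omega> i)) (\<xi> k i \<omega>))"
    unfolding P_Suc cbo_update_snd mN_def ..
  have vQ: "snd (Q (Suc k) \<omega> i) = (if Tb k i \<omega> then snd (Q k \<omega> i) else cbo_W lam \<sigma> \<sigma>0 (mbar k i) (fst (Q k \<omega> i)) (\<xi> k i \<omega>))"
    unfolding Q_Suc cbo_update_snd ..
  have xP: "fst (P (Suc k) \<omega> i) = closest_point D (fst (P k \<omega> i) + dt *\<^sub>R snd (P (Suc k) \<omega> i))"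
    unfolding vP unfolding P_Suc cbo_update_fst mN_def ..
  have xQ: "fst (Q (Suc k) \<omega> i) = closest_point D (fst (Q k \<omega> i) + dt *\<^sub>R snd (Q (Suc k) \<omega> i))"
    unfolding vQ unfolding Q_Suc cbo_update_fst ..
  have "dX (Suc k) i \<omega> \<le> dist (fst (P k \<omega> i) + dt *\<^sub>R snd (P (Suc k) \<omega> i)) (fst (Q k \<omega> i) + dt *\<^sub>R snd (Q (Suc k) \<omega> i))"
    unfolding dX_def xP xQ dist_norm[symmetric] by (rule closest_point_lipschitz[OF D_convex D_closed D_ne])
  also have "\<dots> = norm ((fst (P k \<omega> i) - fst (Q k \<omega> i)) + dt *\<^sub>R (snd (P (Suc k) \<omega> i) - snd (Q (Suc k) \<omega> i)))"
    by (simp add: dist_norm algebra_simps)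
  also have "\<dots> \<le> dX k i \<omega> + dt * dV (Suc k) i \<omega>"
    unfolding dX_def dV_def using dt by (metis (no_types) abs_of_pos norm_scaleR norm_triangle_ineq)
  finally show ?thesis .
qed

lemma dW_le: "dW k i \<omega> \<le> (real CARD('d) * lam + \<sigma> * (\<Sum>l\<in>UNIV. \<bar>\<xi> k i \<omega> $ l\<bar>)) * cc k i \<omega>"
  unfolding dW_def cc_def dX_def by (rule W_diff) (use lam sig in auto)

lemma mbar_norm: "norm (mbar k i) \<le> R"
proof -
  have "AE \<omega> in M. fst (Q k \<omega> i) \<in> D" using AE_Good by (rule AE_mp) (auto intro: Q_in_D)
  then show ?thesis unfolding mbar_def using law_facts(5)[OF Q_meas_M(1)] by blast
qed

lemma R0: "R \<ge> 0"
proof -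
  obtain z where "z \<in> D" using D_ne by blast
  then show ?thesis using R[of z] by (meson norm_ge_zero order_trans)
qed

lemma Good_bounds:
  assumes "Good \<omega>"
  shows "dX k i \<omega> \<le> 2 * R" "norm (mN k \<omega>) \<le> R" "norm (mNb k \<omega>) \<le> R" "cc k i \<omega> \<le> 4 * R"
    "norm (mN k \<omega> - mNb k \<omega>) \<le> ((2 * R * Lw + wu) / wl) * ((1 / real N) * (\<Sum>j<N. dX k j \<omega>))"
proof -
  have a: "norm (fst (P k \<omega> i)) \<le> R" "norm (fst (Q k \<omega> i)) \<le> R" using assms P_in_D Q_in_D R by auto
  show dx: "dX k i \<omega> \<le> 2 * R" unfolding dX_def using a norm_triangle_ineq4[of "fst (P k \<omega> i)" "fst (Q k \<omega> i)"] by linarith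
  show mn: "norm (mN k \<omega>) \<le> R" unfolding mN_def by (rule wavg_norm) (use assms P_in_D in auto)
  show "norm (mNb k \<omega>) \<le> R" unfolding mNb_def by (rule wavg_norm) (use assms Q_in_D in auto)
  show "cc k i \<omega> \<le> 4 * R" unfolding cc_def using mn mbar_norm[of k i] dx norm_triangle_ineq4[of "mN k \<omega>" "mbar k i"] by linarith
  show "norm (mN k \<omega> - mNb k \<omega>) \<le> ((2 * R * Lw + wu) / wl) * ((1 / real N) * (\<Sum>j<N. dX k j \<omega>))"
    unfolding mN_def mNb_def dX_def
    by (rule wavg_lipschitz[OF N1 R wl wb Lw0 wL]) (use assms P_in_D Q_in_D in auto)
qed

lemma nonneg_simps: "dX k i \<omega> \<ge> 0" "dV k i \<omega> \<ge> 0" "dW k i \<omega> \<ge> 0" "cc k i \<omega> \<ge> 0"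
  by (auto simp: dX_def dV_def dW_def cc_def)

lemma dX_int: "integrable M (dX k i)"
  by (rule integrable_const_bound[where B="2*R"])
     (use AE_Good Good_bounds(1) dX_meas[THEN meas_Sub_M] nonneg_simps in \<open>auto elim!: AE_mp\<close>)

lemma cc_int: "integrable M (cc k i)"
  by (rule integrable_const_bound[where B="4*R"])
     (use AE_Good Good_bounds(4) cc_meas[THEN meas_Sub_M] nonneg_simps in \<open>auto elim!: AE_mp\<close>)


lemma noise_pastall_disj: "range (Noise k i) \<inter> pastall k = {}"
  by (auto simp: pastall_def)

lemma noise_cc:
  "integrable M (\<lambda>\<omega>. \<bar>\<xi> k i \<omega> $ l\<bar> * cc k i \<omega>)"
  "(\<integral>\<omega>. \<bar>\<xi> k i \<omega> $ l\<bar> * cc k i \<omega> \<partial>M) = (\<integral>\<omega>. \<bar>\<xi> k i \<omega> $ l\<bar> \<partial>M) * (\<integral>\<omega>. cc k i \<omega> \<partial>M)"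
  using indep_expect[OF noise_pastall_disj noise_abs_meas cc_meas noise_abs(1) cc_int] by auto

definition "fW k i \<omega> = real CARD('d) * lam * cc k i \<omega> + \<sigma> * (\<Sum>l\<in>UNIV. \<bar>\<xi> k i \<omega> $ l\<bar> * cc k i \<omega>)"

lemma fW_int: "integrable M (fW k i)"
  unfolding fW_def[abs_def] using cc_int noise_cc(1) by (intro Bochner_Integration.integrable_add Bochner_Integration.integrable_mult_right Bochner_Integration.integrable_sum) auto

lemma dW_le_fW: "dW k i \<omega> \<le> fW k i \<omega>"
proof -
  have "fW k i \<omega> = (real CARD('d) * lam + \<sigma> * (\<Sum>l\<in>UNIV. \<bar>\<xi> k i \<omega> $ l\<bar>)) * cc k i \<omega>"
    unfolding fW_def by (simp add: algebra_simps sum_distrib_right)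
  then show ?thesis using dW_le by simp
qed

lemma dW_int: "integrable M (dW k i)"
proof (rule Bochner_Integration.integrable_bound[OF fW_int])
  show "dW k i \<in> borel_measurable M" using dW_meas by (rule meas_Sub_M)
  show "AE \<omega> in M. norm (dW k i \<omega>) \<le> norm (fW k i \<omega>)"
    using dW_le_fW nonneg_simps by (intro AE_I2) (smt (verit) real_norm_def)
qed

lemma cc_E_nonneg: "(\<integral>\<omega>. cc k i \<omega> \<partial>M) \<ge> 0"
  using nonneg_simps by (intro integral_nonneg_AE) auto

lemma EdW: "(\<integral>\<omega>. dW k i \<omega> \<partial>M) \<le> real CARD('d) * (lam + \<sigma>) * (\<integral>\<omega>. cc k i \<omega> \<partial>M)"
proof -
  have "(\<integral>\<omega>. dW k i \<omega> \<partial>M) \<le> (\<integral>\<omega>. fW k i \<omega> \<partial>M)"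
    by (intro integral_mono dW_int fW_int dW_le_fW)
  also have "\<dots> = real CARD('d) * lam * (\<integral>\<omega>. cc k i \<omega> \<partial>M) + \<sigma> * (\<Sum>l\<in>UNIV. (\<integral>\<omega>. \<bar>\<xi> k i \<omega> $ l\<bar> * cc k i \<omega> \<partial>M))"
  proof -
    have i1: "integrable M (\<lambda>\<omega>. real CARD('d) * lam * cc k i \<omega>)" using cc_int by simp
    have i2: "integrable M (\<lambda>\<omega>. \<sigma> * (\<Sum>l\<in>UNIV. \<bar>\<xi> k i \<omega> $ l\<bar> * cc k i \<omega>))"
      using noise_cc(1) by (intro Bochner_Integration.integrable_mult_right Bochner_Integration.integrable_sum) auto
    show ?thesis unfolding fW_def[abs_def]
      by (simp add: Bochner_Integration.integral_add[OF i1 i2] Bochner_Integration.integral_sum[OF noise_cc(1)])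
  qed
  also have "\<dots> = real CARD('d) * lam * (\<integral>\<omega>. cc k i \<omega> \<partial>M) + \<sigma> * (\<Sum>l\<in>UNIV. (\<integral>\<omega>. \<bar>\<xi> k i \<omega> $ l\<bar> \<partial>M) * (\<integral>\<omega>. cc k i \<omega> \<partial>M))"
    using noise_cc(2) by simp
  also have "\<dots> \<le> real CARD('d) * lam * (\<integral>\<omega>. cc k i \<omega> \<partial>M) + \<sigma> * (\<Sum>l\<in>(UNIV::'d set). (\<integral>\<omega>. cc k i \<omega> \<partial>M))"
  proof -
    have "(\<Sum>l\<in>UNIV. (\<integral>\<omega>. \<bar>\<xi> k i \<omega> $ l\<bar> \<partial>M) * (\<integral>\<omega>. cc k i \<omega> \<partial>M)) \<le> (\<Sum>l\<in>(UNIV::'d set). (\<integral>\<omega>. cc k i \<omega> \<partial>M))"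
      by (intro sum_mono mult_left_le_one_le) (use noise_abs(2) cc_E_nonneg in auto)
    then show ?thesis using sig by (intro add_mono order_refl mult_left_mono) auto
  qed
  also have "\<dots> = real CARD('d) * (lam + \<sigma>) * (\<integral>\<omega>. cc k i \<omega> \<partial>M)"
    by (simp add: algebra_simps)
  finally show ?thesis .
qed

lemma dV0: "dV 0 i \<omega> = 0" by (simp add: dV_def)
lemma dX0: "dX 0 i \<omega> = 0" by (simp add: dX_def)

lemma dV_int: "integrable M (dV k i)"
proof (induction k)
  case 0
  then show ?case by (simp add: dV0)
next
  case (Suc k)
  show ?case
  proof (rule Bochner_Integration.integrable_bound[OF Bochner_Integration.integrable_add[OF Suc.IH dW_int]])
    show "dV (Suc k) i \<in> borel_measurable M" using dV_meas by (rule meas_Sub_M)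
    show "AE \<omega> in M. norm (dV (Suc k) i \<omega>) \<le> norm (dV k i \<omega> + dW k i \<omega>)"
    proof (intro AE_I2)
      fix \<omega>
      show "norm (dV (Suc k) i \<omega>) \<le> norm (dV k i \<omega> + dW k i \<omega>)"
        unfolding dV_Suc using nonneg_simps[of k i \<omega>] by (cases "Tb k i \<omega>") auto
    qed
  qed
qed

lemma coin_pastall_disj: "{Coin k i} \<inter> pastall k = {}" "{Coin k i} \<inter> (pastall k \<union> range (Noise k i)) = {}"
  by (auto simp: pastall_def)

lemma EdV_Suc: "(\<integral>\<omega>. dV (Suc k) i \<omega> \<partial>M) = p * (\<integral>\<omega>. dV k i \<omega> \<partial>M) + (1 - p) * (\<integral>\<omega>. dW k i \<omega> \<partial>M)"
proof -
  note a = indep_expect[OF coin_pastall_disj(1) coin_meas dV_meas coin_int dV_int]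
  note b = indep_expect[OF coin_pastall_disj(2) coin_meas dW_meas coin_int dW_int]
  have eq: "dV (Suc k) i = (\<lambda>\<omega>. of_bool (Tb k i \<omega>) * dV k i \<omega> + (dW k i \<omega> - of_bool (Tb k i \<omega>) * dW k i \<omega>))"
    by (rule ext) (simp add: dV_Suc algebra_simps)
  show ?thesis unfolding eq using a b dW_int
    by (simp add: coin_expect algebra_simps)
qed

lemma EdX_Suc: "(\<integral>\<omega>. dX (Suc k) i \<omega> \<partial>M) \<le> (\<integral>\<omega>. dX k i \<omega> \<partial>M) + dt * (\<integral>\<omega>. dV (Suc k) i \<omega> \<partial>M)"
proof -
  have "(\<integral>\<omega>. dX (Suc k) i \<omega> \<partial>M) \<le> (\<integral>\<omega>. dX k i \<omega> + dt * dV (Suc k) i \<omega> \<partial>M)"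
    by (intro integral_mono dX_int Bochner_Integration.integrable_add Bochner_Integration.integrable_mult_right dV_int dX_Suc)
  also have "\<dots> = (\<integral>\<omega>. dX k i \<omega> \<partial>M) + dt * (\<integral>\<omega>. dV (Suc k) i \<omega> \<partial>M)"
    using dX_int dV_int by simp
  finally show ?thesis .
qed

definition "Lm = (2 * R * Lw + wu) / wl"

lemma Lm0: "Lm \<ge> 0"
proof -
  obtain z where "z \<in> D" using D_ne by blast
  then have "wu \<ge> 0" using wb[of z] wl by linarith
  then show ?thesis unfolding Lm_def using R0 Lw0 wl by (intro divide_nonneg_pos add_nonneg_nonneg mult_nonneg_nonneg) auto
qed

lemma mNb_mbar_int: "integrable M (\<lambda>\<omega>. norm (mNb k \<omega> - mbar k i))"
proof (rule integrable_const_bound[where B="2*R"])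
  show "AE \<omega> in M. norm (norm (mNb k \<omega> - mbar k i)) \<le> 2 * R"
    using AE_Good
  proof (rule AE_mp, intro AE_I2 impI)
    fix \<omega> assume "Good \<omega>"
    then have "norm (mNb k \<omega>) \<le> R" by (rule Good_bounds)
    then show "norm (norm (mNb k \<omega> - mbar k i)) \<le> 2 * R"
      using mbar_norm[of k i] norm_triangle_ineq4[of "mNb k \<omega>" "mbar k i"] by simp
  qed
  show "(\<lambda>\<omega>. norm (mNb k \<omega> - mbar k i)) \<in> borel_measurable M" using mNb_meas by measurable
qed

lemma Ecc: "(\<integral>\<omega>. cc k i \<omega> \<partial>M) \<le> Lm * ((1 / real N) * (\<Sum>j<N. (\<integral>\<omega>. dX k j \<omega> \<partial>M)))
    + (\<integral>\<omega>. norm (mNb k \<omega> - mbar k i) \<partial>M) + (\<integral>\<omega>. dX k i \<omega> \<partial>M)"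
proof -
  let ?g = "\<lambda>\<omega>. Lm * ((1 / real N) * (\<Sum>j<N. dX k j \<omega>)) + norm (mNb k \<omega> - mbar k i) + dX k i \<omega>"
  have ig: "integrable M ?g"
    using dX_int mNb_mbar_int by (intro Bochner_Integration.integrable_add Bochner_Integration.integrable_mult_right Bochner_Integration.integrable_sum) auto
  have "(\<integral>\<omega>. cc k i \<omega> \<partial>M) \<le> (\<integral>\<omega>. ?g \<omega> \<partial>M)"
  proof (rule integral_mono_AE[OF cc_int ig])
    show "AE \<omega> in M. cc k i \<omega> \<le> ?g \<omega>"
      using AE_Good
    proof (rule AE_mp, intro AE_I2 impI)
      fix \<omega> assume G: "Good \<omega>"
      have "norm (mN k \<omega> - mbar k i) \<le> norm (mN k \<omega> - mNb k \<omega>) + norm (mNb k \<omega> - mbar k i)"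
        using norm_triangle_ineq[of "mN k \<omega> - mNb k \<omega>" "mNb k \<omega> - mbar k i"] by simp
      then show "cc k i \<omega> \<le> ?g \<omega>" unfolding cc_def using Good_bounds(5)[OF G, of k] unfolding Lm_def by linarith
    qed
  qed
  also have "\<dots> = Lm * ((1 / real N) * (\<Sum>j<N. (\<integral>\<omega>. dX k j \<omega> \<partial>M)))
    + (\<integral>\<omega>. norm (mNb k \<omega> - mbar k i) \<partial>M) + (\<integral>\<omega>. dX k i \<omega> \<partial>M)"
    using dX_int mNb_mbar_int
    by (simp add: Bochner_Integration.integral_add Bochner_Integration.integrable_sum Bochner_Integration.integral_sum Bochner_Integration.integrable_mult_right)
  finally show ?thesis .
qed

end

context cbo_prob
begin

lemma Sub_indep_prob:
  assumes disj: "S1 \<inter> S2 = {}" and A: "A \<in> sets (Sub S1)" and B: "B \<in> sets (Sub S2)"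
  shows "prob (A \<inter> B) = prob A * prob B"
proof -
  let ?I = "case_bool S1 S2"
  have "indep_sets G (\<Union>j\<in>UNIV. ?I j)"
    by (rule indep_sets_mono_index[OF _ indep_all]) auto
  moreover have "disjoint_family_on ?I UNIV"
    using disj by (auto simp: disjoint_family_on_def split: bool.splits)
  ultimately have ind: "indep_sets (\<lambda>j. sigma_sets (space M) (\<Union>i\<in>?I j. G i)) UNIV"
    by (intro indep_sets_collect_sigma) (auto intro: Int_stable_G)
  have "(\<lambda>j. sigma_sets (space M) (\<Union>i\<in>?I j. G i)) = case_bool (sets (Sub S1)) (sets (Sub S2))"
    by (rule ext) (simp add: sets_Sub split: bool.splits)
  with ind have "indep_set (sets (Sub S1)) (sets (Sub S2))" unfolding indep_set_def by simp
  then show ?thesis using A B unfolding indep_sets2_eq by blast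
qed

lemma indep_pair_distr:
  assumes disj: "S1 \<inter> S2 = {}" and f: "f \<in> Sub S1 \<rightarrow>\<^sub>M N1" and g: "g \<in> Sub S2 \<rightarrow>\<^sub>M N2"
  shows "distr M (N1 \<Otimes>\<^sub>M N2) (\<lambda>\<omega>. (f \<omega>, g \<omega>)) = distr M N1 f \<Otimes>\<^sub>M distr M N2 g"
proof -
  have rf: "random_variable N1 f" and rg: "random_variable N2 g" using f g by (auto intro: meas_Sub_M)
  then have XY: "random_variable (N1 \<Otimes>\<^sub>M N2) (\<lambda>x. (f x, g x))" by (rule measurable_Pair)
  interpret X: prob_space "distr M N1 f" by (rule prob_space_distr) fact
  interpret Y: prob_space "distr M N2 g" by (rule prob_space_distr) fact
  show ?thesis
  proof (rule pair_measure_eqI[symmetric])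
    show "sigma_finite_measure (distr M N1 f)" ..
    show "sigma_finite_measure (distr M N2 g)" ..
    show "sets (distr M N1 f \<Otimes>\<^sub>M distr M N2 g) = sets (distr M (N1 \<Otimes>\<^sub>M N2) (\<lambda>\<omega>. (f \<omega>, g \<omega>)))" by simp
    fix A B assume A: "A \<in> sets (distr M N1 f)" and B: "B \<in> sets (distr M N2 g)"
    have fA: "f -` A \<inter> space M \<in> sets (Sub S1)" using f A by (auto simp: measurable_def)
    have gB: "g -` B \<inter> space M \<in> sets (Sub S2)" using g B by (auto simp: measurable_def)
    have "emeasure (distr M (N1 \<Otimes>\<^sub>M N2) (\<lambda>\<omega>. (f \<omega>, g \<omega>))) (A \<times> B) = emeasure M ((\<lambda>x. (f x, g x)) -` (A \<times> B) \<inter> space M)"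
      using A B by (intro emeasure_distr[OF XY]) auto
    also have "(\<lambda>x. (f x, g x)) -` (A \<times> B) \<inter> space M = (f -` A \<inter> space M) \<inter> (g -` B \<inter> space M)" by auto
    also have "emeasure M \<dots> = emeasure M (f -` A \<inter> space M) * emeasure M (g -` B \<inter> space M)"
      using Sub_indep_prob[OF disj fA gB]
      by (simp add: emeasure_eq_measure measure_nonneg ennreal_mult)
    also have "\<dots> = emeasure (distr M N1 f) A * emeasure (distr M N2 g) B"
      using rf rg A B by (simp add: emeasure_distr)
    finally show "emeasure (distr M N1 f) A * emeasure (distr M N2 g) B = emeasure (distr M (N1 \<Otimes>\<^sub>M N2) (\<lambda>\<omega>. (f \<omega>, g \<omega>))) (A \<times> B)" by simp
  qed
qed

end

locale cbo_full = cbo_main M X0 V0 Tb \<xi> D F \<alpha> lam \<sigma> \<sigma>0 dt p N R wl wu Lw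
  for M :: "'a measure" and X0 V0 Tb and \<xi> :: "nat \<Rightarrow> nat \<Rightarrow> 'a \<Rightarrow> real^'d::finite"
    and D F \<alpha> lam \<sigma> \<sigma>0 dt p N R wl wu Lw +
  assumes init_law: "\<And>i. distr M borel (\<lambda>\<omega>. (X0 i \<omega>, V0 i \<omega>)) = distr M borel (\<lambda>\<omega>. (X0 0 \<omega>, V0 0 \<omega>))"
begin

abbreviation "TZ \<equiv> (count_space UNIV :: bool measure) \<Otimes>\<^sub>M (borel :: (real^'d) measure)"

definition "NV = distr (\<Pi>\<^sub>M l\<in>(UNIV::'d set). density lborel (\<lambda>x. ennreal (std_normal_density x))) borel (\<lambda>f. \<chi> l. f l)"

lemma vecfun_meas: "(\<lambda>f. \<chi> l. f l) \<in> (\<Pi>\<^sub>M l\<in>(UNIV::'d set). (borel :: real measure)) \<rightarrow>\<^sub>M (borel :: (real^'d) measure)"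
  by (rule vec_meas_components) simp

lemma noise_vec_law: "distr M borel (\<xi> k i) = NV"
proof -
  let ?X = "\<lambda>l \<omega>. \<xi> k i \<omega> $ l"
  have rv: "\<And>l. random_variable borel (?X l)" using meas_noise by simp
  have sets_eq: "{?X l -` A \<inter> space M |A. A \<in> sets borel} = G (Noise k i l)" for l
    by (simp add: cbo_sigmas_def sets_vimage_algebra2)
  have "indep_sets (\<lambda>l. G (Noise k i l)) UNIV"
    by (rule indep_sets_reindex[OF indep_all]) (auto simp: inj_on_def)
  then have ind: "indep_vars (\<lambda>_. borel) ?X UNIV"
    unfolding indep_vars_def2 using rv sets_eq by simp
  have pim: "distr M (\<Pi>\<^sub>M l\<in>UNIV. borel) (\<lambda>\<omega>. \<lambda>l\<in>UNIV. ?X l \<omega>) = (\<Pi>\<^sub>M l\<in>UNIV. distr M borel (?X l))"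
    using indep_vars_iff_distr_eq_PiM[where I=UNIV and M'="\<lambda>_. borel" and X="?X"] rv ind by simp
  have marg: "distr M borel (?X l) = density lborel (\<lambda>x. ennreal (std_normal_density x))" for l
  proof -
    have "distr M borel (?X l) = distr M lborel (?X l)" by (rule distr_cong) auto
    also have "\<dots> = density lborel (\<lambda>x. ennreal (std_normal_density x))"
      using distributed_distr_eq_density[OF noise_law[of k i l]] by simp
    finally show ?thesis .
  qed
  have mX: "(\<lambda>\<omega>. \<lambda>l\<in>UNIV. ?X l \<omega>) \<in> M \<rightarrow>\<^sub>M (\<Pi>\<^sub>M l\<in>(UNIV::'d set). borel)"
    using rv by (intro measurable_restrict) auto
  have "distr M borel (\<xi> k i) = distr M borel (\<lambda>\<omega>. (\<lambda>f. \<chi> l. f l) (\<lambda>l\<in>UNIV. ?X l \<omega>))"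
    by (simp add: vec_lambda_eta)
  also have "\<dots> = distr (distr M (\<Pi>\<^sub>M l\<in>UNIV. borel) (\<lambda>\<omega>. \<lambda>l\<in>UNIV. ?X l \<omega>)) borel (\<lambda>f. \<chi> l. f l)"
    by (rule distr_distr[OF vecfun_meas mX, unfolded comp_def, symmetric])
  also have "\<dots> = NV" unfolding pim marg NV_def ..
  finally show ?thesis .
qed

lemma TZ_meas: "(\<lambda>\<omega>. (Tb k i \<omega>, \<xi> k i \<omega>)) \<in> Sub (insert (Coin k i) (range (Noise k i))) \<rightarrow>\<^sub>M TZ"
proof (rule measurable_Pair)
  show "Tb k i \<in> Sub (insert (Coin k i) (range (Noise k i))) \<rightarrow>\<^sub>M count_space UNIV"
    by (rule meas_coin_Sub) simp
  show "\<xi> k i \<in> borel_measurable (Sub (insert (Coin k i) (range (Noise k i))))"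
    by (rule meas_noisevec_Sub) simp
qed

lemma TZ_law: "distr M TZ (\<lambda>\<omega>. (Tb k i \<omega>, \<xi> k i \<omega>)) = measure_pmf (bernoulli_pmf p) \<Otimes>\<^sub>M NV"
proof -
  have t: "Tb k i \<in> Sub {Coin k i} \<rightarrow>\<^sub>M count_space UNIV" by (rule meas_coin_Sub) simp
  have z: "\<xi> k i \<in> Sub (range (Noise k i)) \<rightarrow>\<^sub>M borel" by (rule meas_noisevec_Sub) simp
  have "distr M TZ (\<lambda>\<omega>. (Tb k i \<omega>, \<xi> k i \<omega>)) = distr M (count_space UNIV) (Tb k i) \<Otimes>\<^sub>M distr M borel (\<xi> k i)"
    by (rule indep_pair_distr[OF _ t z]) auto
  then show ?thesis using coin_law noise_vec_law by simp
qed

lemma Q_pair_meas: "(\<lambda>\<omega>. Q k \<omega> i) \<in> Sub (past i k) \<rightarrow>\<^sub>M (borel :: ((real^'d) \<times> (real^'d)) measure)"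
proof -
  have "(\<lambda>\<omega>. Q k \<omega> i) \<in> Sub (past i k) \<rightarrow>\<^sub>M (borel \<Otimes>\<^sub>M borel)"
    using Q_meas[of k i] by (simp add: measurable_pair_iff o_def)
  then show ?thesis by (simp add: borel_prod)
qed

definition "U m = (\<lambda>(s, tz). cbo_update D dt lam \<sigma> \<sigma>0 m (fst tz) (snd tz) (fst s, snd s))"

lemma U_meas: "U m \<in> ((borel :: ((real^'d) \<times> (real^'d)) measure) \<Otimes>\<^sub>M TZ) \<rightarrow>\<^sub>M borel"
proof -
  let ?N = "(borel :: ((real^'d) \<times> (real^'d)) measure) \<Otimes>\<^sub>M TZ"
  have mm: "(\<lambda>_. m) \<in> borel_measurable ?N" by simp
  have t: "(\<lambda>x. fst (snd x)) \<in> ?N \<rightarrow>\<^sub>M count_space UNIV" by measurable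
  have z: "(\<lambda>x. snd (snd x)) \<in> borel_measurable ?N" by measurable
  have x: "(\<lambda>x. fst (fst x)) \<in> borel_measurable ?N"
  proof -
    have "fst \<in> (borel :: ((real^'d) \<times> (real^'d)) measure) \<rightarrow>\<^sub>M (borel :: (real^'d) measure)"
      using measurable_fst[of "borel :: (real^'d) measure" "borel :: (real^'d) measure"] by (simp add: borel_prod)
    then show ?thesis by measurable
  qed
  have v: "(\<lambda>x. snd (fst x)) \<in> borel_measurable ?N"
  proof -
    have "snd \<in> (borel :: ((real^'d) \<times> (real^'d)) measure) \<rightarrow>\<^sub>M (borel :: (real^'d) measure)"
      using measurable_snd[of "borel :: (real^'d) measure" "borel :: (real^'d) measure"] by (simp add: borel_prod)
    then show ?thesis by measurable
  qed
  note u = upd_meas[OF D_convex D_closed D_ne mm t z x v, of dt lam \<sigma> \<sigma>0]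
  have "U m \<in> ?N \<rightarrow>\<^sub>M (borel \<Otimes>\<^sub>M borel)"
    unfolding measurable_pair_iff U_def using u by (simp add: o_def case_prod_beta)
  then show ?thesis by (simp add: borel_prod)
qed

lemma Q_Suc_U: "Q (Suc k) \<omega> i = U (mbar k i) (Q k \<omega> i, (Tb k i \<omega>, \<xi> k i \<omega>))"
  unfolding Q_Suc U_def by simp

lemma mbar_from_law: "mbar k i = Xalpha \<alpha> F (distr (distr M borel (\<lambda>\<omega>. Q k \<omega> i)) borel fst)"
proof -
  have f: "fst \<in> (borel :: ((real^'d) \<times> (real^'d)) measure) \<rightarrow>\<^sub>M (borel :: (real^'d) measure)"
    using measurable_fst[of "borel :: (real^'d) measure" "borel :: (real^'d) measure"] by (simp add: borel_prod)
  have "distr (distr M borel (\<lambda>\<omega>. Q k \<omega> i)) borel fst = distr M borel (\<lambda>\<omega>. fst (Q k \<omega> i))"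
    using distr_distr[OF f meas_Sub_M[OF Q_pair_meas]] by (simp add: comp_def)
  then show ?thesis unfolding mbar_def by simp
qed

lemma law_eq: "distr M borel (\<lambda>\<omega>. Q k \<omega> i) = distr M borel (\<lambda>\<omega>. Q k \<omega> 0)"
proof (induction k arbitrary: i)
  case 0
  show ?case using init_law[of i] init_law[of 0] by simp
next
  case (Suc k)
  have step: "distr M borel (\<lambda>\<omega>. Q (Suc k) \<omega> j) =
      distr (distr M borel (\<lambda>\<omega>. Q k \<omega> j) \<Otimes>\<^sub>M (measure_pmf (bernoulli_pmf p) \<Otimes>\<^sub>M NV)) borel (U (mbar k j))" for j
  proof -
    have disj: "past j k \<inter> insert (Coin k j) (range (Noise k j)) = {}" by (auto simp: past_def)
    have je: "distr M (borel \<Otimes>\<^sub>M TZ) (\<lambda>\<omega>. (Q k \<omega> j, (Tb k j \<omega>, \<xi> k j \<omega>))) =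
        distr M borel (\<lambda>\<omega>. Q k \<omega> j) \<Otimes>\<^sub>M (measure_pmf (bernoulli_pmf p) \<Otimes>\<^sub>M NV)"
      using indep_pair_distr[OF disj Q_pair_meas TZ_meas] TZ_law by simp
    have mj: "(\<lambda>\<omega>. (Q k \<omega> j, (Tb k j \<omega>, \<xi> k j \<omega>))) \<in> M \<rightarrow>\<^sub>M (borel \<Otimes>\<^sub>M TZ)"
      by (rule measurable_Pair[OF meas_Sub_M[OF Q_pair_meas] meas_Sub_M[OF TZ_meas]])
    have "distr M borel (\<lambda>\<omega>. Q (Suc k) \<omega> j) = distr M borel (\<lambda>\<omega>. U (mbar k j) (Q k \<omega> j, (Tb k j \<omega>, \<xi> k j \<omega>)))"
      unfolding Q_Suc_U ..
    also have "\<dots> = distr (distr M (borel \<Otimes>\<^sub>M TZ) (\<lambda>\<omega>. (Q k \<omega> j, (Tb k j \<omega>, \<xi> k j \<omega>)))) borel (U (mbar k j))"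
      using distr_distr[OF U_meas mj] by (simp add: comp_def)
    finally show ?thesis unfolding je .
  qed
  have "mbar k i = mbar k 0" unfolding mbar_from_law Suc.IH[of i] ..
  then show ?case unfolding step Suc.IH[of i] by simp
qed

lemma mbar_eq: "mbar k i = mbar k 0"
  unfolding mbar_from_law law_eq[of k i] ..

end

context cbo_full
begin

definition "Zf k j l \<omega> = w (fst (Q k \<omega> j)) * (fst (Q k \<omega> j) $ l - mbar k 0 $ l)"
definition "Cn = 2 * R * wu * real CARD('d) / wl"

lemma wu_nonneg: "wu \<ge> 0"
proof -
  obtain z where "z \<in> D" using D_ne by blast
  then show ?thesis using wb[of z] wl by linarith
qed

lemma Zf_meas: "Zf k j l \<in> borel_measurable (Sub (past j k))"
proof -
  note [measurable] = Q_meas[THEN conjunct1]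
  show ?thesis unfolding Zf_def[abs_def] by measurable
qed

lemma Zf_bound: "Good \<omega> \<Longrightarrow> \<bar>Zf k j l \<omega>\<bar> \<le> 2 * R * wu"
proof -
  assume G: "Good \<omega>"
  have yD: "fst (Q k \<omega> j) \<in> D" using Q_in_D[OF G] .
  have "\<bar>fst (Q k \<omega> j) $ l - mbar k 0 $ l\<bar> = \<bar>(fst (Q k \<omega> j) - mbar k 0) $ l\<bar>" by simp
  also have "\<dots> \<le> norm (fst (Q k \<omega> j) - mbar k 0)" by (rule component_le_norm_cart)
  also have "\<dots> \<le> norm (fst (Q k \<omega> j)) + norm (mbar k 0)" by (rule norm_triangle_ineq4)
  also have "\<dots> \<le> 2 * R" using R[OF yD] mbar_norm[of k 0] by simp
  finally have a: "\<bar>fst (Q k \<omega> j) $ l - mbar k 0 $ l\<bar> \<le> 2 * R" .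
  have b: "0 \<le> w (fst (Q k \<omega> j))" "w (fst (Q k \<omega> j)) \<le> wu" using wb[OF yD] wl by auto
  have "\<bar>Zf k j l \<omega>\<bar> = w (fst (Q k \<omega> j)) * \<bar>fst (Q k \<omega> j) $ l - mbar k 0 $ l\<bar>"
    unfolding Zf_def using b by (simp add: abs_mult)
  also have "\<dots> \<le> wu * (2 * R)" using a b R0 by (intro mult_mono) auto
  finally show ?thesis by (simp add: mult_ac)
qed

lemma Zf_int: "integrable M (Zf k j l)"
  by (rule integrable_const_bound[where B="2 * R * wu"])
     (use AE_Good Zf_bound Zf_meas[THEN meas_Sub_M] in \<open>auto elim!: AE_mp\<close>)

lemma Zf_prod_int: "integrable M (\<lambda>\<omega>. Zf k j l \<omega> * Zf k j' l \<omega>)"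
proof (rule integrable_const_bound[where B="(2 * R * wu) * (2 * R * wu)"])
  show "AE \<omega> in M. norm (Zf k j l \<omega> * Zf k j' l \<omega>) \<le> 2 * R * wu * (2 * R * wu)"
    using AE_Good
  proof (rule AE_mp, intro AE_I2 impI)
    fix \<omega> assume G: "Good \<omega>"
    show "norm (Zf k j l \<omega> * Zf k j' l \<omega>) \<le> 2 * R * wu * (2 * R * wu)"
      unfolding real_norm_def abs_mult using Zf_bound[OF G, of k j l] Zf_bound[OF G, of k j' l]
      by (intro mult_mono) auto
  qed
  show "(\<lambda>\<omega>. Zf k j l \<omega> * Zf k j' l \<omega>) \<in> borel_measurable M"
    using Zf_meas[THEN meas_Sub_M] by measurable
qed

lemma Zf_mean: "(\<integral>\<omega>. Zf k j l \<omega> \<partial>M) = 0"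
proof -
  have "AE \<omega> in M. fst (Q k \<omega> j) \<in> D" using AE_Good by (rule AE_mp) (auto intro: Q_in_D)
  note lf = law_facts(6)[OF Q_meas_M(1) this, of l]
  have "mbar k 0 = Xalpha \<alpha> F (distr M borel (\<lambda>\<omega>. fst (Q k \<omega> j)))"
    using mbar_eq[of k j] unfolding mbar_def by simp
  then show ?thesis unfolding Zf_def using lf by simp
qed

lemma past_disj: assumes "j \<noteq> j'" shows "past j k \<inter> past j' k = {}"
proof (rule equals0I)
  fix s assume "s \<in> past j k \<inter> past j' k"
  then show False using assms by (cases s) (auto simp: past_def)
qed

lemma Zf_cross: "j \<noteq> j' \<Longrightarrow> (\<integral>\<omega>. Zf k j l \<omega> * Zf k j' l \<omega> \<partial>M) = 0"
  using indep_expect(1)[OF past_disj Zf_meas Zf_meas Zf_int Zf_int] Zf_mean by simp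

lemma Zf_sq: "(\<integral>\<omega>. Zf k j l \<omega> * Zf k j l \<omega> \<partial>M) \<le> (2 * R * wu)\<^sup>2"
proof -
  have "(\<integral>\<omega>. Zf k j l \<omega> * Zf k j l \<omega> \<partial>M) \<le> (\<integral>\<omega>. (2 * R * wu)\<^sup>2 \<partial>M)"
  proof (rule integral_mono_AE[OF Zf_prod_int])
    show "AE \<omega> in M. Zf k j l \<omega> * Zf k j l \<omega> \<le> (2 * R * wu)\<^sup>2"
      using AE_Good
    proof (rule AE_mp, intro AE_I2 impI)
      fix \<omega> assume G: "Good \<omega>"
      have "\<bar>Zf k j l \<omega>\<bar> * \<bar>Zf k j l \<omega>\<bar> \<le> (2 * R * wu) * (2 * R * wu)"
        using Zf_bound[OF G, of k j l] by (intro mult_mono) auto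
      then show "Zf k j l \<omega> * Zf k j l \<omega> \<le> (2 * R * wu)\<^sup>2" by (simp add: power2_eq_square abs_mult[symmetric])
    qed
  qed simp
  then show ?thesis by (simp add: prob_space)
qed

definition "Sf k l \<omega> = (\<Sum>j<N. Zf k j l \<omega>)"

lemma Sf_sq: "(\<integral>\<omega>. (Sf k l \<omega>)\<^sup>2 \<partial>M) \<le> real N * (2 * R * wu)\<^sup>2"
proof -
  have "(\<integral>\<omega>. (Sf k l \<omega>)\<^sup>2 \<partial>M) = (\<integral>\<omega>. (\<Sum>j<N. \<Sum>j'<N. Zf k j l \<omega> * Zf k j' l \<omega>) \<partial>M)"
    unfolding Sf_def power2_eq_square sum_product ..
  also have "\<dots> = (\<Sum>j<N. \<Sum>j'<N. (\<integral>\<omega>. Zf k j l \<omega> * Zf k j' l \<omega> \<partial>M))"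
    using Zf_prod_int by (simp add: Bochner_Integration.integral_sum Bochner_Integration.integrable_sum)
  also have "\<dots> = (\<Sum>j<N. (\<integral>\<omega>. Zf k j l \<omega> * Zf k j l \<omega> \<partial>M))"
  proof (rule sum.cong[OF refl])
    fix j assume j: "j \<in> {..<N}"
    have "(\<Sum>j'<N. (\<integral>\<omega>. Zf k j l \<omega> * Zf k j' l \<omega> \<partial>M)) = (\<Sum>j'<N. if j' = j then (\<integral>\<omega>. Zf k j l \<omega> * Zf k j l \<omega> \<partial>M) else 0)"
      by (rule sum.cong[OF refl]) (auto simp: Zf_cross)
    also have "\<dots> = (\<integral>\<omega>. Zf k j l \<omega> * Zf k j l \<omega> \<partial>M)" using j by simp
    finally show "(\<Sum>j'<N. (\<integral>\<omega>. Zf k j l \<omega> * Zf k j' l \<omega> \<partial>M)) = (\<integral>\<omega>. Zf k j l \<omega> * Zf k j l \<omega> \<partial>M)" .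
  qed
  also have "\<dots> \<le> (\<Sum>j<N. (2 * R * wu)\<^sup>2)" by (intro sum_mono Zf_sq)
  also have "\<dots> = real N * (2 * R * wu)\<^sup>2" by simp
  finally show ?thesis .
qed

lemma Sf_int: "integrable M (Sf k l)" "integrable M (\<lambda>\<omega>. (Sf k l \<omega>)\<^sup>2)"
proof -
  show "integrable M (Sf k l)" unfolding Sf_def[abs_def] using Zf_int by (intro Bochner_Integration.integrable_sum) auto
  have "(\<lambda>\<omega>. (Sf k l \<omega>)\<^sup>2) = (\<lambda>\<omega>. (\<Sum>j<N. \<Sum>j'<N. Zf k j l \<omega> * Zf k j' l \<omega>))"
    unfolding Sf_def power2_eq_square sum_product ..
  then show "integrable M (\<lambda>\<omega>. (Sf k l \<omega>)\<^sup>2)" using Zf_prod_int by (simp add: Bochner_Integration.integrable_sum)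
qed

lemma Sf_abs: "(\<integral>\<omega>. \<bar>Sf k l \<omega>\<bar> \<partial>M) \<le> 2 * R * wu * sqrt (real N)"
proof -
  have i1: "integrable M (\<lambda>\<omega>. \<bar>Sf k l \<omega>\<bar>)" using Sf_int(1) by (rule integrable_abs)
  have i2: "integrable M (\<lambda>\<omega>. (\<bar>Sf k l \<omega>\<bar>)\<^sup>2)" using Sf_int(2) by simp
  have "0 \<le> (\<integral>\<omega>. (\<bar>Sf k l \<omega>\<bar> - (\<integral>\<omega>. \<bar>Sf k l \<omega>\<bar> \<partial>M))\<^sup>2 \<partial>M)" by simp
  also have "\<dots> = (\<integral>\<omega>. (\<bar>Sf k l \<omega>\<bar>)\<^sup>2 \<partial>M) - (\<integral>\<omega>. \<bar>Sf k l \<omega>\<bar> \<partial>M)\<^sup>2"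
    by (rule variance_eq[OF i1 i2])
  finally have "(\<integral>\<omega>. \<bar>Sf k l \<omega>\<bar> \<partial>M)\<^sup>2 \<le> (\<integral>\<omega>. (Sf k l \<omega>)\<^sup>2 \<partial>M)" by simp
  also have "\<dots> \<le> real N * (2 * R * wu)\<^sup>2" by (rule Sf_sq)
  finally have "(\<integral>\<omega>. \<bar>Sf k l \<omega>\<bar> \<partial>M) \<le> sqrt (real N * (2 * R * wu)\<^sup>2)" by (rule real_le_rsqrt)
  also have "\<dots> = 2 * R * wu * sqrt (real N)" using R0 wu_nonneg by (simp add: real_sqrt_mult)
  finally show ?thesis .
qed

lemma mNb_bound_pw:
  assumes G: "Good \<omega>"
  shows "norm (mNb k \<omega> - mbar k i) \<le> (1 / (real N * wl)) * (\<Sum>l\<in>UNIV. \<bar>Sf k l \<omega>\<bar>)"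
proof -
  define y where "y = (\<lambda>j. fst (Q k \<omega> j))"
  define mb where "mb = mbar k 0"
  define SY where "SY = (\<Sum>j<N. w (y j))"
  have yD: "\<And>j. y j \<in> D" unfolding y_def using Q_in_D[OF G] by blast
  have "(\<Sum>j<N. wl) \<le> SY" unfolding SY_def using wb yD by (intro sum_mono) auto
  then have SYg: "SY \<ge> real N * wl" by simp
  have Npos: "real N * wl > 0" using N1 wl by simp
  have SY0: "SY > 0" using SYg Npos by linarith
  define V where "V = (\<Sum>j<N. w (y j) *\<^sub>R (y j - mb))"
  have V_eq: "(\<Sum>j<N. w (y j) *\<^sub>R y j) - SY *\<^sub>R mb = V"
    unfolding V_def SY_def by (simp add: scaleR_diff_right sum_subtractf scaleR_sum_left)
  have eq: "mNb k \<omega> - mb = (1 / SY) *\<^sub>R V"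
    using SY0 unfolding mNb_def wavg_def y_def[symmetric] SY_def[symmetric] V_eq[symmetric]
    by (simp add: scaleR_diff_right)
  have Vl: "V $ l = Sf k l \<omega>" for l
    unfolding V_def Sf_def Zf_def y_def mb_def by (simp add: algebra_simps)
  have "norm (mNb k \<omega> - mbar k i) = (1 / SY) * norm V"
    using eq SY0 mbar_eq[of k i] by (simp add: mb_def)
  also have "\<dots> \<le> (1 / SY) * (\<Sum>l\<in>UNIV. \<bar>Sf k l \<omega>\<bar>)"
    using SY0 norm_le_l1_cart[of V] unfolding Vl by (intro mult_left_mono) auto
  also have "\<dots> \<le> (1 / (real N * wl)) * (\<Sum>l\<in>UNIV. \<bar>Sf k l \<omega>\<bar>)"
    using SYg Npos by (intro mult_right_mono divide_left_mono) (auto intro: sum_nonneg)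
  finally show ?thesis .
qed

lemma LLN: "(\<integral>\<omega>. norm (mNb k \<omega> - mbar k i) \<partial>M) \<le> Cn / sqrt (real N)"
proof -
  have iS: "integrable M (\<lambda>\<omega>. (1 / (real N * wl)) * (\<Sum>l\<in>UNIV. \<bar>Sf k l \<omega>\<bar>))"
    using Sf_int(1) by (intro Bochner_Integration.integrable_mult_right Bochner_Integration.integrable_sum integrable_abs) auto
  have "(\<integral>\<omega>. norm (mNb k \<omega> - mbar k i) \<partial>M) \<le> (\<integral>\<omega>. (1 / (real N * wl)) * (\<Sum>l\<in>UNIV. \<bar>Sf k l \<omega>\<bar>) \<partial>M)"
    by (rule integral_mono_AE[OF mNb_mbar_int iS]) (use AE_Good mNb_bound_pw in \<open>auto elim!: AE_mp\<close>)
  also have "\<dots> = (1 / (real N * wl)) * (\<Sum>l\<in>UNIV. (\<integral>\<omega>. \<bar>Sf k l \<omega>\<bar> \<partial>M))"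
    using Sf_int(1) by (simp add: Bochner_Integration.integral_sum integrable_abs)
  also have "\<dots> \<le> (1 / (real N * wl)) * (\<Sum>l\<in>(UNIV::'d set). 2 * R * wu * sqrt (real N))"
    using wl N1 by (intro mult_left_mono sum_mono Sf_abs) auto
  also have "\<dots> = Cn / sqrt (real N)"
  proof -
    have sN: "sqrt (real N) * sqrt (real N) = real N" by simp
    have "sqrt (real N) > 0" using N1 by simp
    then show ?thesis unfolding Cn_def using wl sN
      by (simp add: field_simps)
  qed
  finally show ?thesis .
qed

end

context cbo_full
begin

definition "K1 = real CARD('d) * (lam + \<sigma>)"
definition "KK = K1 * (Lm + 1 + Cn)"
definition "EXa k = (1 / real N) * (\<Sum>i<N. (\<integral>\<omega>. dX k i \<omega> \<partial>M))"
definition "EVa k = (1 / real N) * (\<Sum>i<N. (\<integral>\<omega>. dV k i \<omega> \<partial>M))"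
definition "eps = 1 / sqrt (real N)"

lemma Cn_nonneg: "Cn \<ge> 0" unfolding Cn_def using R0 wu_nonneg wl by simp
lemma K1_pos: "K1 > 0" unfolding K1_def using lam sig by simp
lemma KK_nonneg: "KK \<ge> 0" unfolding KK_def using K1_pos Lm0 Cn_nonneg by simp
lemma eps_nonneg: "eps \<ge> 0" unfolding eps_def by simp
lemma EXa_nonneg: "EXa k \<ge> 0"
  unfolding EXa_def using nonneg_simps by (intro mult_nonneg_nonneg sum_nonneg integral_nonneg_AE) auto
lemma EVa_nonneg: "EVa k \<ge> 0"
  unfolding EVa_def using nonneg_simps by (intro mult_nonneg_nonneg sum_nonneg integral_nonneg_AE) auto

lemma avgW: "(1 / real N) * (\<Sum>i<N. (\<integral>\<omega>. dW k i \<omega> \<partial>M)) \<le> KK * (EXa k + eps)"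
proof -
  have each: "(\<integral>\<omega>. dW k i \<omega> \<partial>M) \<le> K1 * (Lm * EXa k + Cn * eps + (\<integral>\<omega>. dX k i \<omega> \<partial>M))" for i
  proof -
    have "(\<integral>\<omega>. dW k i \<omega> \<partial>M) \<le> K1 * (\<integral>\<omega>. cc k i \<omega> \<partial>M)" using EdW unfolding K1_def .
    also have "\<dots> \<le> K1 * (Lm * EXa k + Cn * eps + (\<integral>\<omega>. dX k i \<omega> \<partial>M))"
    proof (rule mult_left_mono)
      have "(\<integral>\<omega>. cc k i \<omega> \<partial>M) \<le> Lm * EXa k + (\<integral>\<omega>. norm (mNb k \<omega> - mbar k i) \<partial>M) + (\<integral>\<omega>. dX k i \<omega> \<partial>M)"
        using Ecc unfolding EXa_def .
      moreover have "(\<integral>\<omega>. norm (mNb k \<omega> - mbar k i) \<partial>M) \<le> Cn * eps" using LLN unfolding eps_def by simp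
      ultimately show "(\<integral>\<omega>. cc k i \<omega> \<partial>M) \<le> Lm * EXa k + Cn * eps + (\<integral>\<omega>. dX k i \<omega> \<partial>M)" by linarith
    qed (use K1_pos in simp)
    finally show ?thesis .
  qed
  have "(1 / real N) * (\<Sum>i<N. (\<integral>\<omega>. dW k i \<omega> \<partial>M)) \<le> (1 / real N) * (\<Sum>i<N. K1 * (Lm * EXa k + Cn * eps + (\<integral>\<omega>. dX k i \<omega> \<partial>M)))"
    by (intro mult_left_mono sum_mono each) auto
  also have "\<dots> = K1 * (Lm * EXa k + Cn * eps + EXa k)"
    using N1 unfolding EXa_def by (simp add: sum.distrib sum_distrib_left field_simps)
  also have "\<dots> \<le> KK * (EXa k + eps)"
  proof -
    have "Lm * EXa k + Cn * eps + EXa k \<le> (Lm + 1 + Cn) * (EXa k + eps)"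
      using EXa_nonneg[of k] eps_nonneg Lm0 Cn_nonneg
      by (simp add: algebra_simps)
    then show ?thesis unfolding KK_def using K1_pos by (simp add: mult.assoc)
  qed
  finally show ?thesis .
qed

lemma EVa_Suc: "EVa (Suc k) = p * EVa k + (1 - p) * ((1 / real N) * (\<Sum>i<N. (\<integral>\<omega>. dW k i \<omega> \<partial>M)))"
proof -
  have s: "(\<Sum>i<N. p * (\<integral>\<omega>. dV k i \<omega> \<partial>M) + (1 - p) * (\<integral>\<omega>. dW k i \<omega> \<partial>M))
      = p * (\<Sum>i<N. (\<integral>\<omega>. dV k i \<omega> \<partial>M)) + (1 - p) * (\<Sum>i<N. (\<integral>\<omega>. dW k i \<omega> \<partial>M))"
    by (simp add: sum.distrib sum_distrib_left)
  show ?thesis unfolding EVa_def EdV_Suc s using N1 by (simp add: field_simps)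
qed

lemma EXa_Suc: "EXa (Suc k) \<le> EXa k + dt * EVa (Suc k)"
proof -
  have "EXa (Suc k) \<le> (1 / real N) * (\<Sum>i<N. (\<integral>\<omega>. dX k i \<omega> \<partial>M) + dt * (\<integral>\<omega>. dV (Suc k) i \<omega> \<partial>M))"
    unfolding EXa_def by (intro mult_left_mono sum_mono EdX_Suc) auto
  also have "\<dots> = EXa k + dt * EVa (Suc k)"
    unfolding EXa_def EVa_def by (simp add: sum.distrib sum_distrib_left algebra_simps)
  finally show ?thesis .
qed

lemma main_rec: "EXa k + eps \<le> (1 + KK * dt) ^ k * eps \<and> EVa k \<le> KK * ((1 + KK * dt) ^ k * eps)"
proof (induction k)
  case 0
  have "EXa 0 = 0" "EVa 0 = 0" by (simp_all add: EXa_def EVa_def dX0 dV0)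
  then show ?case using KK_nonneg eps_nonneg by simp
next
  case (Suc k)
  define a where "a = (1 + KK * dt) ^ k * eps"
  have a0: "a \<ge> 0" unfolding a_def using KK_nonneg dt eps_nonneg by simp
  have IH1: "EXa k + eps \<le> a" and IH2: "EVa k \<le> KK * a" using Suc.IH unfolding a_def by auto
  have W: "(1 / real N) * (\<Sum>i<N. (\<integral>\<omega>. dW k i \<omega> \<partial>M)) \<le> KK * a"
    using avgW[of k] IH1 KK_nonneg by (smt (verit) mult_left_mono)
  have V: "EVa (Suc k) \<le> KK * a"
  proof -
    have "EVa (Suc k) \<le> p * (KK * a) + (1 - p) * (KK * a)"
      unfolding EVa_Suc using IH2 W p01 by (intro add_mono mult_left_mono) auto
    then show ?thesis by (simp add: algebra_simps)
  qed
  have Ka: "KK * a \<le> KK * ((1 + KK * dt) ^ Suc k * eps)"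
  proof -
    have "a \<le> (1 + KK * dt) * a" using a0 KK_nonneg dt by (simp add: algebra_simps)
    then show ?thesis using KK_nonneg unfolding a_def by (intro mult_left_mono) (simp_all add: mult.assoc)
  qed
  have X: "EXa (Suc k) + eps \<le> (1 + KK * dt) ^ Suc k * eps"
  proof -
    have "EXa (Suc k) + eps \<le> EXa k + eps + dt * EVa (Suc k)" using EXa_Suc[of k] by simp
    also have "\<dots> \<le> a + dt * (KK * a)" using IH1 V dt by (intro add_mono mult_left_mono) auto
    also have "\<dots> = (1 + KK * dt) ^ Suc k * eps" unfolding a_def by (simp add: algebra_simps)
    finally show ?thesis .
  qed
  show ?case using X V Ka by simp
qed

lemma final_bound:
  assumes "real k * dt \<le> Tend"
  shows "EXa k + EVa k \<le> (1 + KK) * exp ((1 + KK) * Tend) / sqrt (real N)"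
proof -
  have b: "(1 + KK * dt) ^ k \<le> exp (KK * dt * real k)"
  proof -
    have "(1 + KK * dt) ^ k \<le> (exp (KK * dt)) ^ k"
      by (intro power_mono) (use exp_ge_add_one_self[of "KK * dt"] KK_nonneg dt in auto)
    also have "\<dots> = exp (KK * dt * real k)" by (simp add: exp_of_nat_mult[symmetric] mult_ac)
    finally show ?thesis .
  qed
  have c: "exp (KK * dt * real k) \<le> exp ((1 + KK) * Tend)"
  proof -
    have "KK * (real k * dt) \<le> KK * Tend" by (rule mult_left_mono[OF assms KK_nonneg])
    then have "KK * dt * real k \<le> KK * Tend" by (simp add: mult_ac)
    also have "\<dots> \<le> (1 + KK) * Tend"
    proof -
      have "Tend \<ge> 0" using assms dt by (smt (verit) mult_nonneg_nonneg of_nat_0_le_iff)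
      then show ?thesis by (simp add: algebra_simps)
    qed
    finally show ?thesis by simp
  qed
  have "EXa k + EVa k \<le> (1 + KK * dt) ^ k * eps + KK * ((1 + KK * dt) ^ k * eps)"
    using main_rec[of k] eps_nonneg by linarith
  also have "\<dots> = (1 + KK) * ((1 + KK * dt) ^ k * eps)" by (simp add: algebra_simps)
  also have "\<dots> \<le> (1 + KK) * (exp ((1 + KK) * Tend) * eps)"
  proof -
    have bc: "(1 + KK * dt) ^ k \<le> exp ((1 + KK) * Tend)" by (rule order_trans[OF b c])
    show ?thesis using bc KK_nonneg eps_nonneg by (intro mult_left_mono mult_right_mono) auto
  qed
  also have "\<dots> = (1 + KK) * exp ((1 + KK) * Tend) / sqrt (real N)" unfolding eps_def by simp
  finally show ?thesis .
qed

lemma err_facts: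
  fixes k :: nat
  defines "err \<equiv> (\<lambda>\<omega>. (1 / real N) * (\<Sum>i<N. norm (fst (P k \<omega> i) - fst (Q k \<omega> i)) + norm (snd (P k \<omega> i) - snd (Q k \<omega> i))))"
  shows "integrable M err" "(\<integral>\<omega>. err \<omega> \<partial>M) = EXa k + EVa k"
proof -
  have e: "err = (\<lambda>\<omega>. (1 / real N) * (\<Sum>i<N. dX k i \<omega> + dV k i \<omega>))"
    unfolding err_def dX_def dV_def ..
  show "integrable M err" unfolding e using dX_int dV_int
    by (intro Bochner_Integration.integrable_mult_right Bochner_Integration.integrable_sum Bochner_Integration.integrable_add) auto
  show "(\<integral>\<omega>. err \<omega> \<partial>M) = EXa k + EVa k" unfolding e EXa_def EVa_def using dX_int dV_int
    by (simp add: Bochner_Integration.integral_sum Bochner_Integration.integrable_add Bochner_Integration.integral_add sum.distrib algebra_simps)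
qed

end

context cbo_full
begin

lemma final_explicit:
  assumes "real k * dt \<le> Tend"
  shows "EXa k + EVa k \<le> (1 + real CARD('d) * (lam + \<sigma>) * ((2 * R * Lw + wu) / wl + 1 + 2 * R * wu * real CARD('d) / wl))
      * exp ((1 + real CARD('d) * (lam + \<sigma>) * ((2 * R * Lw + wu) / wl + 1 + 2 * R * wu * real CARD('d) / wl)) * Tend) / sqrt (real N)"
  using final_bound[OF assms] unfolding KK_def K1_def Lm_def Cn_def .

end

lemma setting_to_full:
  fixes M :: "'a measure" and D :: "(real^'d::finite) set"
  assumes set: "cbo_setting M D dt \<nu> f0 X0 V0 Tb \<xi>"
    and Dc: "compact D" "convex D" and Fcont: "continuous_on UNIV F"
    and R: "\<And>z. z \<in> D \<Longrightarrow> norm z \<le> R"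
    and wl: "wl > 0" and wb: "\<And>z. z \<in> D \<Longrightarrow> wl \<le> cbo_weight \<alpha> F z \<and> cbo_weight \<alpha> F z \<le> wu"
    and Lw0: "Lw \<ge> 0"
    and wL: "\<And>z z'. z \<in> D \<Longrightarrow> z' \<in> D \<Longrightarrow> \<bar>cbo_weight \<alpha> F z - cbo_weight \<alpha> F z'\<bar> \<le> Lw * norm (z - z')"
    and N1: "N \<ge> 1" and lam: "lam > 0" and sig: "\<sigma> > 0" and dt: "dt > 0" "dt \<le> 1" and nu: "\<nu> > 0"
  shows "cbo_full M X0 V0 Tb \<xi> D F \<alpha> lam \<sigma> dt (exp (- \<nu> * dt)) N R wl wu Lw"
proof -
  from set have ps: "prob_space M" and pf: "prob_space f0" and sf: "sets f0 = sets borel"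
    and ef: "emeasure f0 (D \<times> UNIV) = 1"
    and init: "\<And>i. (\<lambda>\<omega>. (X0 i \<omega>, V0 i \<omega>)) \<in> M \<rightarrow>\<^sub>M borel \<and> distr M borel (\<lambda>\<omega>. (X0 i \<omega>, V0 i \<omega>)) = f0"
    and coin: "\<And>k i. Tb k i \<in> M \<rightarrow>\<^sub>M count_space UNIV \<and>
          distr M (count_space UNIV) (Tb k i) = measure_pmf (bernoulli_pmf (exp (- \<nu> * dt)))"
    and noise: "\<And>k i l. distributed M lborel (\<lambda>\<omega>. \<xi> k i \<omega> $ l) std_normal_density"
    and ind: "prob_space.indep_sets M (cbo_sigmas M X0 V0 Tb \<xi>) UNIV"
    unfolding cbo_setting_def by auto
  interpret prob_space M by (rule ps)
  have cp: "cbo_prob M X0 V0 Tb \<xi>"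
  proof (unfold_locales)
    show "\<And>i. (\<lambda>\<omega>. (X0 i \<omega>, V0 i \<omega>)) \<in> M \<rightarrow>\<^sub>M borel" using init by blast
    show "\<And>k i. Tb k i \<in> M \<rightarrow>\<^sub>M count_space UNIV" using coin by blast
    show "\<And>k i l. (\<lambda>\<omega>. \<xi> k i \<omega> $ l) \<in> borel_measurable M"
      using noise[THEN distributed_measurable] by (simp add: measurable_lborel1)
    show "indep_sets (cbo_sigmas M X0 V0 Tb \<xi>) UNIV" by (rule ind)
  qed
  have Dne: "D \<noteq> {}" using ef by auto
  have Dcl: "closed D" using Dc compact_imp_closed by blast
  have X0D: "AE \<omega> in M. \<forall>i. X0 i \<omega> \<in> D"
  proof (subst AE_all_countable, intro allI)
    fix i
    interpret f0: prob_space f0 by (rule pf)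
    have spf: "space f0 = UNIV" using sets_eq_imp_space_eq[OF sf] by simp
    have DU: "D \<times> UNIV \<in> sets f0" unfolding sf using Dcl by (intro borel_closed closed_Times) auto
    have A: "AE x in f0. x \<in> D \<times> UNIV"
      using f0.AE_I_eq_1[of "\<lambda>x. x \<in> D \<times> UNIV"] ef DU spf by simp
    have e: "distr M borel (\<lambda>\<omega>. (X0 i \<omega>, V0 i \<omega>)) = f0" using init by blast
    have "AE x in distr M borel (\<lambda>\<omega>. (X0 i \<omega>, V0 i \<omega>)). x \<in> D \<times> UNIV"
      unfolding e by (fact A)
    from AE_distrD[OF init[THEN conjunct1] this]
    show "AE \<omega> in M. X0 i \<omega> \<in> D" by simp
  qed
  show ?thesis
  proof (intro cbo_full.intro cbo_main.intro cp)
    show "cbo_main_axioms M X0 Tb \<xi> D F \<alpha> lam \<sigma> dt (exp (- \<nu> * dt)) N R wl wu Lw"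
    proof (unfold_locales)
      show "0 \<le> exp (- \<nu> * dt)" by simp
      show "exp (- \<nu> * dt) \<le> 1" using nu dt by simp
      show "\<And>k i. distr M (count_space UNIV) (Tb k i) = measure_pmf (bernoulli_pmf (exp (- \<nu> * dt)))" using coin by blast
    qed (use Dc Dne X0D Fcont R wl wb Lw0 wL N1 lam sig dt noise in auto)
    show "cbo_full_axioms M X0 V0" unfolding cbo_full_axioms_def using init by simp
  qed
qed


lemma exp_lip_aux:
  fixes a b c :: real
  assumes "a \<le> b" "b \<le> c"
  shows "\<bar>exp a - exp b\<bar> \<le> exp c * \<bar>a - b\<bar>"
proof -
  have "exp b * (1 + (a - b)) \<le> exp b * exp (a - b)"
    by (intro mult_left_mono exp_ge_add_one_self) auto
  also have "\<dots> = exp a" by (simp add: exp_diff)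
  finally have "exp b - exp a \<le> exp b * (b - a)" by (simp add: algebra_simps)
  also have "\<dots> \<le> exp c * (b - a)" using assms by (intro mult_right_mono) auto
  finally show ?thesis using assms by (simp add: abs_if)
qed

lemma exp_lip:
  fixes a b c :: real
  assumes "a \<le> c" "b \<le> c"
  shows "\<bar>exp a - exp b\<bar> \<le> exp c * \<bar>a - b\<bar>"
proof (cases "a \<le> b")
  case True then show ?thesis using exp_lip_aux assms by blast
next
  case False
  then have "\<bar>exp b - exp a\<bar> \<le> exp c * \<bar>b - a\<bar>" using exp_lip_aux assms by simp
  then show ?thesis by (simp add: abs_minus_commute)
qed

lemma lip_cont:
  fixes F :: "real^'d::finite \<Rightarrow> real"
  assumes LF: "LF > 0" and Lip: "\<forall>x y. \<bar>F x - F y\<bar> \<le> LF * (1 + norm x + norm y) * norm (x - y)"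
  shows "continuous_on UNIV F"
  unfolding continuous_on_iff
proof (intro ballI allI impI)
  fix x :: "real^'d" and e :: real assume e: "e > 0"
  define d where "d = min 1 (e / (LF * (2 + 2 * norm x)))"
  have pos: "LF * (2 + 2 * norm x) > 0" using LF by (simp add: add_pos_nonneg)
  have d0: "d > 0" unfolding d_def using e pos by simp
  show "\<exists>d>0. \<forall>x'\<in>UNIV. dist x' x < d \<longrightarrow> dist (F x') (F x) < e"
  proof (intro exI[of _ d] conjI ballI impI d0)
    fix y assume "dist y x < d"
    then have yx: "norm (y - x) < d" by (simp add: dist_norm)
    have "norm y \<le> norm x + norm (y - x)" by (metis add.commute diff_add_cancel norm_triangle_ineq)
    then have ny: "norm y \<le> norm x + 1" using yx unfolding d_def by simp
    have "\<bar>F y - F x\<bar> \<le> LF * (1 + norm y + norm x) * norm (y - x)" using Lip by blast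
    also have "\<dots> \<le> LF * (2 + 2 * norm x) * norm (y - x)"
      using ny LF by (intro mult_right_mono mult_left_mono) auto
    also have "\<dots> < LF * (2 + 2 * norm x) * (e / (LF * (2 + 2 * norm x)))"
    proof -
      have "norm (y - x) < e / (LF * (2 + 2 * norm x))" using yx unfolding d_def by simp
      then show ?thesis using pos by (intro mult_strict_left_mono) auto
    qed
    also have "\<dots> = e"
    proof -
      have ne: "LF * (2 + 2 * norm x) \<noteq> 0" using pos by linarith
      show ?thesis by (metis ne nonzero_mult_div_cancel_left times_divide_eq_right)
    qed
    finally show "dist (F y) (F x) < e" by (simp add: dist_real_def)
  qed
qed

theorem theorem3p1:
  fixes \<alpha> lam \<sigma> :: real and F :: "real^'d \<Rightarrow> real" and D :: "(real^'d) set"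
  assumes "\<alpha> > 0" and "lam > 0" and "\<sigma> > 0"
    and "compact D" and "convex D"
    and A1: "bdd_below (range F)"
    and A2: "\<exists>xstar. (\<forall>y. F xstar \<le> F y) \<and>
              (\<exists>LF cu cl Rl. LF > 0 \<and> cu > 0 \<and> cl > 0 \<and> Rl > 0 \<and>
                 (\<forall>x y. \<bar>F x - F y\<bar> \<le> LF * (1 + norm x + norm y) * norm (x - y)) \<and>
                 (\<forall>x. F x - F xstar \<le> cu * (1 + (norm x)\<^sup>2)) \<and>
                 (\<forall>x. norm x > Rl \<longrightarrow> F x - F xstar \<ge> cl * (norm x)\<^sup>2))"
  shows "\<exists>C > 0. \<forall>(M :: 'a measure) dt \<nu> \<sigma>0 f0 X0 V0 Tb \<xi> (N :: nat) (Tend :: real) (k :: nat).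
           cbo_setting M D dt \<nu> f0 X0 V0 Tb \<xi> \<and>
           0 < dt \<and> dt \<le> 1 \<and> \<nu> > 0 \<and> \<sigma>0 \<ge> 0 \<and> N \<ge> 1 \<and> Tend > 0 \<and> real k * dt \<le> Tend
           \<longrightarrow>
           (let P = particles \<alpha> F D dt lam \<sigma> \<sigma>0 X0 V0 Tb \<xi> N k;
                Q = mf_copies M \<alpha> F D dt lam \<sigma> \<sigma>0 X0 V0 Tb \<xi> k;
                err = (\<lambda>\<omega>. (1 / real N) * (\<Sum>i<N. norm (fst (P \<omega> i) - fst (Q \<omega> i))
                                                  + norm (snd (P \<omega> i) - snd (Q \<omega> i))))
            in integrable M err \<and>
               (\<integral>\<omega>. err \<omega> \<partial>M) \<le> C * exp (C * Tend) / sqrt (real N))"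

proof -
  obtain xstar LF cu cl Rl where LF: "LF > 0"
    and Lip: "\<forall>x y. \<bar>F x - F y\<bar> \<le> LF * (1 + norm x + norm y) * norm (x - y)"
    using A2 by blast
  have Fc: "continuous_on UNIV F" by (rule lip_cont[OF LF Lip])
  obtain R where R0: "R > 0" and R: "\<And>z. z \<in> D \<Longrightarrow> norm z \<le> R"
    using compact_imp_bounded[OF assms(4)] unfolding bounded_pos by blast
  have "compact (F ` D)" by (rule compact_continuous_image[OF continuous_on_subset[OF Fc] assms(4)]) simp
  then have "bounded (F ` D)" by (rule compact_imp_bounded)
  then obtain B where B0: "B > 0" and B': "\<forall>y\<in>F ` D. norm y \<le> B" unfolding bounded_pos by blast
  have B: "\<And>z. z \<in> D \<Longrightarrow> \<bar>F z\<bar> \<le> B" using B' by simp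
  define wl where "wl = exp (- \<alpha> * B)"
  define wu where "wu = exp (\<alpha> * B)"
  define Lw where "Lw = exp (\<alpha> * B) * (\<alpha> * (LF * (1 + 2 * R)))"
  have wl0: "wl > 0" unfolding wl_def by simp
  have wu0: "wu \<ge> 0" unfolding wu_def by simp
  have Lw0: "Lw \<ge> 0" unfolding Lw_def using assms(1) LF R0 by simp
  have expo: "- \<alpha> * B \<le> - \<alpha> * F z \<and> - \<alpha> * F z \<le> \<alpha> * B" if z: "z \<in> D" for z
  proof -
    have h1: "- B \<le> F z" and h2: "F z \<le> B" using B[OF z] by auto
    have "\<alpha> * (- B) \<le> \<alpha> * F z" using mult_left_mono[OF h1, of \<alpha>] assms(1) by simp
    moreover have "\<alpha> * F z \<le> \<alpha> * B" using mult_left_mono[OF h2, of \<alpha>] assms(1) by simp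
    ultimately show ?thesis by simp
  qed
  have wb: "\<And>z. z \<in> D \<Longrightarrow> wl \<le> cbo_weight \<alpha> F z \<and> cbo_weight \<alpha> F z \<le> wu"
    unfolding wl_def wu_def cbo_weight_def using expo by simp
  have wL: "\<bar>cbo_weight \<alpha> F z - cbo_weight \<alpha> F z'\<bar> \<le> Lw * norm (z - z')" if z: "z \<in> D" "z' \<in> D" for z z'
  proof -
    have "\<bar>cbo_weight \<alpha> F z - cbo_weight \<alpha> F z'\<bar> \<le> exp (\<alpha> * B) * \<bar>- \<alpha> * F z - - \<alpha> * F z'\<bar>"
      unfolding cbo_weight_def using expo[OF z(1)] expo[OF z(2)] by (intro exp_lip) auto
    also have "\<bar>- \<alpha> * F z - - \<alpha> * F z'\<bar> = \<alpha> * \<bar>F z - F z'\<bar>"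
    proof -
      have "- \<alpha> * F z - - \<alpha> * F z' = \<alpha> * (F z' - F z)" by (simp add: algebra_simps)
      then show ?thesis using assms(1) by (simp add: abs_mult abs_minus_commute)
    qed
    also have "\<alpha> * \<bar>F z - F z'\<bar> \<le> \<alpha> * (LF * (1 + 2 * R) * norm (z - z'))"
    proof (rule mult_left_mono)
      have "\<bar>F z - F z'\<bar> \<le> LF * (1 + norm z + norm z') * norm (z - z')" using Lip by blast
      also have "\<dots> \<le> LF * (1 + 2 * R) * norm (z - z')"
        using R[OF z(1)] R[OF z(2)] LF by (intro mult_right_mono mult_left_mono) auto
      finally show "\<bar>F z - F z'\<bar> \<le> LF * (1 + 2 * R) * norm (z - z')" .
    qed (use assms(1) in simp)
    finally show ?thesis unfolding Lw_def using assms(1) by (simp add: mult_ac)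
  qed
  define C where "C = 1 + real CARD('d) * (lam + \<sigma>) * ((2 * R * Lw + wu) / wl + 1 + 2 * R * wu * real CARD('d) / wl)"
  have C0: "C > 0"
  proof -
    have "0 \<le> real CARD('d) * (lam + \<sigma>) * ((2 * R * Lw + wu) / wl + 1 + 2 * R * wu * real CARD('d) / wl)"
      using assms(2,3) R0 Lw0 wu0 wl0 by (intro mult_nonneg_nonneg add_nonneg_nonneg divide_nonneg_pos) auto
    then show ?thesis unfolding C_def by simp
  qed
  show ?thesis
  proof (intro exI[of _ C] conjI C0 allI impI)
    fix M :: "'a measure" and dt \<nu> \<sigma>0 :: real and f0 :: "((real^'d) \<times> (real^'d)) measure"
      and X0 V0 :: "nat \<Rightarrow> 'a \<Rightarrow> real^'d" and Tb :: "nat \<Rightarrow> nat \<Rightarrow> 'a \<Rightarrow> bool"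
      and \<xi> :: "nat \<Rightarrow> nat \<Rightarrow> 'a \<Rightarrow> real^'d" and N :: nat and Tend :: real and k :: nat
    assume H: "cbo_setting M D dt \<nu> f0 X0 V0 Tb \<xi> \<and> 0 < dt \<and> dt \<le> 1 \<and> \<nu> > 0 \<and> \<sigma>0 \<ge> 0 \<and> N \<ge> 1 \<and> Tend > 0 \<and> real k * dt \<le> Tend"
    have full: "cbo_full M X0 V0 Tb \<xi> D F \<alpha> lam \<sigma> dt (exp (- \<nu> * dt)) N R wl wu Lw"
      by (rule setting_to_full[OF H[THEN conjunct1] assms(4,5) Fc R wl0 wb Lw0 wL])
         (use H assms(2,3) in auto)
    note ef = cbo_full.err_facts[OF full, of \<sigma>0 k]
    note fb = cbo_full.final_explicit[OF full, of k Tend \<sigma>0]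
    show "let P = particles \<alpha> F D dt lam \<sigma> \<sigma>0 X0 V0 Tb \<xi> N k;
                Q = mf_copies M \<alpha> F D dt lam \<sigma> \<sigma>0 X0 V0 Tb \<xi> k;
                err = (\<lambda>\<omega>. (1 / real N) * (\<Sum>i<N. norm (fst (P \<omega> i) - fst (Q \<omega> i))
                                                  + norm (snd (P \<omega> i) - snd (Q \<omega> i))))
            in integrable M err \<and>
               (\<integral>\<omega>. err \<omega> \<partial>M) \<le> C * exp (C * Tend) / sqrt (real N)"
      unfolding Let_def using ef fb H unfolding C_def by simp
  qed
qed

end
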